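(* Let $p$ be an odd prime, $e\geq 2$, and $N$ cyclic of order $p^e$. Let $G$ be a transitive subgroup of $\mathrm{Hol}(N)$, $H$ any subgroup of $G$ of index $p^e$, and $C=\mathrm{Core}_G(H)$. The following are equivalent: (1) $G/C$ is isomorphic to a transitive subgroup $T$ of $\mathrm{Hol}(N)$ under an isomorphism that sends $H/C$ to $\mathrm{Stab}_T(1_N)$; (2) $H$ is conjugate to $\mathrm{Stab}_G(1_N)$ in $G$.
   Context: $\mathrm{Hol}(N)=N\rtimes\mathrm{Aut}(N)$ acts on $N$ by $(\eta,\alpha)\cdot x=\eta\,\alpha(x)$; a subgroup is transitive if it acts transitively on $N$, and $\mathrm{Stab}_T(1_N)=T\cap\mathrm{Aut}(N)$ is the stabiliser of the identity. $\mathrm{Core}_G(H)$ is the largest normal subgroup of $G$ contained in $H$. *)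

theory Defs
  imports "HOL-Algebra.Algebra"
begin

definition Hol :: "'a monoid \<Rightarrow> ('a \<times> ('a \<Rightarrow> 'a)) monoid" where
  "Hol N = \<lparr> carrier = carrier N \<times> auto N,
             monoid.mult = (\<lambda>s t. (fst s \<otimes>\<^bsub>N\<^esub> snd s (fst t), compose (carrier N) (snd s) (snd t))),
             monoid.one = (\<one>\<^bsub>N\<^esub>, (\<lambda>x\<in>carrier N. x)) \<rparr>"

definition hol_act :: "'a monoid \<Rightarrow> ('a \<times> ('a \<Rightarrow> 'a)) \<Rightarrow> 'a \<Rightarrow> 'a" where
  "hol_act N t x = fst t \<otimes>\<^bsub>N\<^esub> (snd t) x"

definition hol_transitive :: "'a monoid \<Rightarrow> ('a \<times> ('a \<Rightarrow> 'a)) set \<Rightarrow> bool" where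
  "hol_transitive N T \<longleftrightarrow>
     (\<forall>x\<in>carrier N. \<forall>y\<in>carrier N. \<exists>t\<in>T. hol_act N t x = y)"

text \<open>Stab_T(1_N) = T \<inter> Aut(N), where Aut(N) is embedded as the pairs (1, alpha).\<close>
definition hol_stab :: "'a monoid \<Rightarrow> ('a \<times> ('a \<Rightarrow> 'a)) set \<Rightarrow> ('a \<times> ('a \<Rightarrow> 'a)) set" where
  "hol_stab N T = T \<inter> ({\<one>\<^bsub>N\<^esub>} \<times> auto N)"

definition core :: "('g, 'b) monoid_scheme \<Rightarrow> 'g set \<Rightarrow> 'g set" where
  "core G H = (\<Inter>g\<in>carrier G. g <#\<^bsub>G\<^esub> H #>\<^bsub>G\<^esub> inv\<^bsub>G\<^esub> g)"

end

theory Submission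
  imports Defs "HOL-Number_Theory.Number_Theory"
begin

definition gs :: "nat \<Rightarrow> int \<Rightarrow> int" where "gs k u = (\<Sum>i<k. u ^ i)"

lemma gs_0 [simp]: "gs 0 u = 0" by (simp add: gs_def)
lemma gs_Suc: "gs (Suc k) u = gs k u + u ^ k" by (simp add: gs_def)

lemma gs_add: "gs (a + b) u = gs a u + u ^ a * gs b u"
  by (induction b) (simp_all add: gs_Suc algebra_simps power_add)

lemma gs_mult: "gs (a * b) u = gs a u * gs b (u ^ a)"
proof (induction b)
  case 0 then show ?case by simp
next
  case (Suc b)
  have "gs (a * Suc b) u = gs (a * b + a) u" by (simp add: add.commute)
  also have "\<dots> = gs (a*b) u + u ^ (a*b) * gs a u" by (rule gs_add)
  also have "\<dots> = gs a u * gs (Suc b) (u ^ a)"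
    using Suc by (simp add: gs_Suc algebra_simps power_mult)
  finally show ?case .
qed

lemma gs_cong1: "[v = 1] (mod q) \<Longrightarrow> [gs k v = int k] (mod q)"
proof (induction k)
  case 0 then show ?case by simp
next
  case (Suc k)
  have "[v ^ k = 1] (mod q)" using Suc.prems cong_pow by fastforce
  then have "[gs k v + v ^ k = int k + 1] (mod q)" using Suc cong_add by blast
  then show ?case by (simp add: gs_Suc add.commute)
qed

lemma cong_ex: "[u = c] (mod (m::int)) \<Longrightarrow> \<exists>t. u = c + m * t"
  using cong_iff_dvd_diff[of u c m] by (auto simp: dvd_def algebra_simps)

lemma gs_geom: "1 + (u - 1) * gs k u = u ^ k"
  by (induction k) (simp_all add: gs_Suc algebra_simps)

lemma sum_int_lt: "2 * (\<Sum>i<k. int i) = int k * (int k - 1)"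
  by (induction k) (simp_all add: algebra_simps)

lemma pow_lin_cong:
  fixes p t :: int
  shows "[(1 + p * t) ^ i = 1 + int i * p * t] (mod p^2)"
proof (induction i)
  case 0 then show ?case by simp
next
  case (Suc i)
  have "[(1 + p * t) ^ Suc i = (1 + int i * p * t) * (1 + p * t)] (mod p^2)"
    using cong_mult[OF Suc cong_refl[of "1 + p * t"]] by (simp add: mult.commute)
  moreover have "(1 + int i * p * t) * (1 + p * t) = 1 + int (Suc i) * p * t + p^2 * (int i * t * t)"
    by (simp add: algebra_simps power2_eq_square)
  moreover have "[1 + int (Suc i) * p * t + p^2 * (int i * t * t) = 1 + int (Suc i) * p * t] (mod p^2)"
    by (simp add: cong_iff_dvd_diff)
  ultimately show ?case using cong_trans by metis
qed

lemma gs_p_cong: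
  assumes p: "Factorial_Ring.prime p" "odd p" and u: "[u = 1] (mod int p)"
  shows "[gs p u = int p] (mod (int p)^2)"
proof -
  obtain t where t: "u = 1 + int p * t"
    using cong_ex[OF u] by blast
  have c0: "[gs p u = (\<Sum>i<p. 1 + int i * int p * t)] (mod (int p)^2)"
    unfolding gs_def t by (rule cong_sum) (rule pow_lin_cong)
  have e1: "(\<Sum>i<p. 1 + int i * int p * t) = int p + int p * t * (\<Sum>i<p. int i)"
    by (simp add: sum.distrib sum_distrib_left sum_distrib_right algebra_simps)
  obtain r where r: "p = 2 * r + 1" using p(2) oddE by blast
  have e2: "(\<Sum>i<p. int i) = int p * int r"
  proof -
    have "int p - 1 = 2 * int r" using r by simp
    then have "2 * (\<Sum>i<p. int i) = 2 * (int p * int r)" using sum_int_lt[of p] by simp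
    then show ?thesis by simp
  qed
  have c1: "[gs p u = int p + int p * t * (int p * int r)] (mod (int p)^2)"
    using c0 by (simp only: e1 e2)
  have "int p + int p * t * (int p * int r) = int p + (int p)^2 * (t * int r)"
    by (simp add: power2_eq_square algebra_simps)
  then have "[gs p u = int p + (int p)^2 * (t * int r)] (mod (int p)^2)" using c1 by metis
  moreover have "[int p + (int p)^2 * (t * int r) = int p] (mod (int p)^2)"
    by (simp add: cong_iff_dvd_diff)
  ultimately show ?thesis using cong_trans by blast
qed

lemma gs_ppow:
  assumes p: "Factorial_Ring.prime p" "odd p" and u: "[u = 1] (mod int p)"
  shows "\<exists>w. gs (p ^ k) u = int p ^ k * w \<and> [w = 1] (mod int p)"
proof (induction k)
  case 0 then show ?case by (simp add: gs_def)
next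
  case (Suc k)
  then obtain w where w: "gs (p ^ k) u = int p ^ k * w" "[w = 1] (mod int p)" by blast
  have v: "[u ^ (p ^ k) = 1] (mod int p)" using u cong_pow by fastforce
  have "[gs p (u ^ (p^k)) = int p] (mod (int p)^2)" by (rule gs_p_cong[OF p v])
  then obtain s where s: "gs p (u ^ (p^k)) = int p + (int p)^2 * s"
    using cong_ex by blast
  have "gs (p ^ Suc k) u = gs (p ^ k * p) u" by (simp add: mult.commute)
  also have "\<dots> = gs (p ^ k) u * gs p (u ^ (p^k))" by (rule gs_mult)
  also have "\<dots> = int p ^ Suc k * (w * (1 + int p * s))"
    by (simp add: w s power2_eq_square algebra_simps)
  finally have e: "gs (p ^ Suc k) u = int p ^ Suc k * (w * (1 + int p * s))" .
  have "[1 + int p * s = 1] (mod int p)" by (simp add: cong_iff_dvd_diff)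
  then have "[w * (1 + int p * s) = 1 * 1] (mod int p)" using w(2) cong_mult by blast
  then show ?case using e by auto
qed


locale cyc =
  fixes N :: "'a monoid" and p e :: nat and a :: 'a
  assumes cg: "comm_group N"
    and pp: "Factorial_Ring.prime p" and po: "odd p" and e1: "1 \<le> e"
    and a_in: "a \<in> carrier N"
    and gen: "carrier N = range (\<lambda>k::int. a [^]\<^bsub>N\<^esub> k)"
    and ord_a: "group.ord N a = p ^ e"
begin

interpretation N: comm_group N by (rule cg)

definition pw :: "int \<Rightarrow> 'a \<Rightarrow> 'a" where "pw u = (\<lambda>x\<in>carrier N. x [^]\<^bsub>N\<^esub> u)"
definition el :: "int \<Rightarrow> int \<Rightarrow> 'a \<times> ('a \<Rightarrow> 'a)" where "el b u = (a [^]\<^bsub>N\<^esub> b, pw u)"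

abbreviation "n \<equiv> int p ^ e"

lemma p_gt1: "p > 1" using pp by (rule prime_gt_1_nat)

lemma n_pos: "n > 1"
proof -
  have "p ^ e > 1" using p_gt1 e1 by (intro one_less_power) auto
  then show ?thesis by (metis of_nat_1 of_nat_less_iff of_nat_power)
qed

lemma apow_in [simp]: "a [^]\<^bsub>N\<^esub> (x::int) \<in> carrier N"
  using a_in by simp

lemma apow_eq: "a [^]\<^bsub>N\<^esub> (x::int) = a [^]\<^bsub>N\<^esub> (y::int) \<longleftrightarrow> [x = y] (mod n)"
  using N.int_pow_eq[OF a_in, of x y] ord_a
  by (simp add: cong_iff_dvd_diff dvd_diff_commute)

lemma apow_one: "a [^]\<^bsub>N\<^esub> (x::int) = \<one>\<^bsub>N\<^esub> \<longleftrightarrow> [x = 0] (mod n)"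
  using apow_eq[of x 0] by simp

lemma pow_of: "x \<in> carrier N \<Longrightarrow> \<exists>k::int. x = a [^]\<^bsub>N\<^esub> k"
  using gen by auto

lemma apow_pow: "(a [^]\<^bsub>N\<^esub> (k::int)) [^]\<^bsub>N\<^esub> (u::int) = a [^]\<^bsub>N\<^esub> (k * u)"
  using a_in by (simp add: N.int_pow_pow)

lemma apow_mult: "a [^]\<^bsub>N\<^esub> (k::int) \<otimes>\<^bsub>N\<^esub> a [^]\<^bsub>N\<^esub> (l::int) = a [^]\<^bsub>N\<^esub> (k + l)"
  using a_in by (simp add: N.int_pow_mult)

lemma pow_cong: "x \<in> carrier N \<Longrightarrow> [i = j] (mod n) \<Longrightarrow> x [^]\<^bsub>N\<^esub> (i::int) = x [^]\<^bsub>N\<^esub> j"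
proof -
  assume x: "x \<in> carrier N" and c: "[i = j] (mod n)"
  obtain k :: int where k: "x = a [^]\<^bsub>N\<^esub> k" using pow_of[OF x] by blast
  have "[k * i = k * j] (mod n)" using c by (rule cong_scalar_left)
  then show ?thesis unfolding k apow_pow apow_eq .
qed

lemma pw_apply: "x \<in> carrier N \<Longrightarrow> pw u x = x [^]\<^bsub>N\<^esub> u"
  by (simp add: pw_def)

lemma pw_ext: "pw u \<in> extensional (carrier N)"
  unfolding pw_def by (rule restrict_extensional)

lemma pw_eq: "pw u = pw v \<longleftrightarrow> [u = v] (mod n)"
proof
  assume "pw u = pw v"
  then have "pw u a = pw v a" by simp
  then have "a [^]\<^bsub>N\<^esub> u = a [^]\<^bsub>N\<^esub> v" using a_in by (simp add: pw_apply)
  then show "[u = v] (mod n)" using apow_eq by simp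
next
  assume c: "[u = v] (mod n)"
  show "pw u = pw v" unfolding pw_def
    by (rule restrict_ext) (rule pow_cong[OF _ c])
qed

lemma n_coprime: "\<not> int p dvd u \<Longrightarrow> coprime u n"
proof -
  assume "\<not> int p dvd u"
  then have "coprime (int p) u" using pp by (intro prime_imp_coprime) (auto simp: prime_nat_int_transfer)
  then show ?thesis by (simp add: coprime_commute)
qed

lemma pw_auto: assumes u: "\<not> int p dvd u" shows "pw u \<in> auto N"
proof -
  obtain u' where u': "[u * u' = 1] (mod n)" using cong_solve_coprime_int[OF n_coprime[OF u]] by blast
  have hom: "pw u \<in> hom N N"
    unfolding hom_def by (auto simp: pw_apply N.int_pow_distrib)
  have inv1: "pw u' (pw u x) = x" if x: "x \<in> carrier N" for x
  proof -
    have "pw u' (pw u x) = x [^]\<^bsub>N\<^esub> (u * u')" using x by (simp add: pw_apply N.int_pow_pow)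
    also have "\<dots> = x [^]\<^bsub>N\<^esub> (1::int)" by (rule pow_cong[OF x u'])
    finally show ?thesis using x by simp
  qed
  have inv2: "pw u (pw u' x) = x" if x: "x \<in> carrier N" for x
  proof -
    have "pw u (pw u' x) = x [^]\<^bsub>N\<^esub> (u' * u)" using x by (simp add: pw_apply N.int_pow_pow)
    also have "\<dots> = x [^]\<^bsub>N\<^esub> (1::int)" by (rule pow_cong[OF x]) (use u' in \<open>simp add: mult.commute\<close>)
    finally show ?thesis using x by simp
  qed
  have "bij_betw (pw u) (carrier N) (carrier N)"
  proof (rule bij_betwI[where g = "pw u'"])
    show "pw u \<in> carrier N \<rightarrow> carrier N" by (auto simp: pw_apply)
    show "pw u' \<in> carrier N \<rightarrow> carrier N" by (auto simp: pw_apply)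
    show "\<And>x. x \<in> carrier N \<Longrightarrow> pw u' (pw u x) = x" by (rule inv1)
    show "\<And>y. y \<in> carrier N \<Longrightarrow> pw u (pw u' y) = y" by (rule inv2)
  qed
  moreover have "pw u \<in> extensional (carrier N)" by (rule pw_ext)
  ultimately show ?thesis using hom by (simp add: auto_def Bij_def)
qed

lemma auto_pw: assumes al: "\<alpha> \<in> auto N" shows "\<exists>u. \<alpha> = pw u \<and> \<not> int p dvd u"
proof -
  have hom: "\<alpha> \<in> hom N N" and bij: "bij_betw \<alpha> (carrier N) (carrier N)"
    and ext: "\<alpha> \<in> extensional (carrier N)"
    using al by (auto simp: auto_def Bij_def)
  have "\<alpha> a \<in> carrier N" using hom a_in by (auto simp: hom_def)
  then obtain u :: int where u: "\<alpha> a = a [^]\<^bsub>N\<^esub> u" using pow_of by blast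
  have eq: "\<alpha> x = pw u x" if x: "x \<in> carrier N" for x
  proof -
    obtain k :: int where k: "x = a [^]\<^bsub>N\<^esub> k" using pow_of[OF x] by blast
    have "\<alpha> x = \<alpha> a [^]\<^bsub>N\<^esub> k" unfolding k by (rule hom_int_pow[OF hom a_in N.is_group N.is_group])
    also have "\<dots> = a [^]\<^bsub>N\<^esub> (u * k)" by (simp add: u apow_pow)
    also have "\<dots> = pw u x" using x by (simp add: pw_apply k apow_pow mult.commute)
    finally show ?thesis .
  qed
  have "\<alpha> = pw u"
    by (rule extensionalityI[OF ext pw_ext eq])
  moreover have "\<not> int p dvd u"
  proof
    assume pu: "int p dvd u"
    define z where "z = a [^]\<^bsub>N\<^esub> (int p ^ (e - 1))"
    have "[int p ^ (e - 1) * u = 0] (mod n)"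
    proof -
      obtain c where "u = int p * c" using pu by blast
      moreover have "int p ^ (e - 1) * int p = n" using e1
        by (metis Suc_diff_le diff_Suc_1 power_Suc2)
      ultimately have "int p ^ (e - 1) * u = n * c" by (simp add: mult.assoc[symmetric])
      then show ?thesis by (simp add: cong_iff_dvd_diff)
    qed
    then have "a [^]\<^bsub>N\<^esub> (int p ^ (e - 1) * u) = \<one>\<^bsub>N\<^esub>" by (simp only: apow_one)
    then have "\<alpha> z = \<one>\<^bsub>N\<^esub>" using eq[of z] by (simp add: z_def pw_apply apow_pow)
    moreover have "\<alpha> \<one>\<^bsub>N\<^esub> = \<one>\<^bsub>N\<^esub>" using eq[of "\<one>\<^bsub>N\<^esub>"] by (simp add: pw_apply)
    moreover have "z \<noteq> \<one>\<^bsub>N\<^esub>"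
    proof
      assume "z = \<one>\<^bsub>N\<^esub>"
      then have "n dvd int p ^ (e - 1)" by (simp add: z_def apow_one cong_0_iff)
      then have "p ^ e dvd p ^ (e - 1)" by (metis of_nat_dvd_iff of_nat_power)
      then have "e \<le> e - 1" using p_gt1 by (rule power_dvd_imp_le)
      then show False using e1 by simp
    qed
    moreover have "z \<in> carrier N" by (simp add: z_def)
    moreover have "inj_on \<alpha> (carrier N)" using bij by (simp add: bij_betw_def)
    ultimately show False using N.one_closed by (metis inj_onD)
  qed
  ultimately show ?thesis by blast
qed

end

context cyc begin

interpretation N: comm_group N by (rule cg)

lemma pp_int: "Factorial_Ring.prime (int p)" using pp by simp

lemma p_dvd_n: "int p dvd n" using e1 by (simp add: dvd_power)

lemma el_in: "\<not> int p dvd u \<Longrightarrow> el b u \<in> carrier (Hol N)"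
  by (simp add: el_def Hol_def pw_auto)

lemma carrier_el: assumes g: "g \<in> carrier (Hol N)" shows "\<exists>b u. g = el b u \<and> \<not> int p dvd u"
proof -
  obtain \<eta> \<alpha> where g2: "g = (\<eta>, \<alpha>)" "\<eta> \<in> carrier N" "\<alpha> \<in> auto N" using g by (auto simp: Hol_def)
  obtain b :: int where b: "\<eta> = a [^]\<^bsub>N\<^esub> b" using pow_of[OF g2(2)] by blast
  obtain u where u: "\<alpha> = pw u" "\<not> int p dvd u" using auto_pw[OF g2(3)] by blast
  show ?thesis using g2 b u by (auto simp: el_def)
qed

lemma el_mult: "el b u \<otimes>\<^bsub>Hol N\<^esub> el c v = el (b + u * c) (u * v)"
proof -
  have 1: "a [^]\<^bsub>N\<^esub> b \<otimes>\<^bsub>N\<^esub> pw u (a [^]\<^bsub>N\<^esub> c) = a [^]\<^bsub>N\<^esub> (b + u * c)"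
    by (simp add: pw_apply apow_pow apow_mult mult.commute)
  have 2: "compose (carrier N) (pw u) (pw v) = pw (u * v)"
    unfolding compose_def pw_def
    by (rule restrict_ext) (simp add: N.int_pow_pow mult.commute)
  show ?thesis by (simp add: Hol_def el_def 1 2)
qed

lemma el_eq: "el b u = el c v \<longleftrightarrow> [b = c] (mod n) \<and> [u = v] (mod n)"
  by (simp add: el_def apow_eq pw_eq)

lemma one_N: "\<one>\<^bsub>N\<^esub> = a [^]\<^bsub>N\<^esub> (0::int)" by simp

lemma one_el: "\<one>\<^bsub>Hol N\<^esub> = el 0 1"
proof -
  have "pw 1 = (\<lambda>x\<in>carrier N. x)" unfolding pw_def by (rule restrict_ext) simp
  then show ?thesis by (simp add: Hol_def el_def)
qed

lemma act_el: "hol_act N (el b u) (a [^]\<^bsub>N\<^esub> (x::int)) = a [^]\<^bsub>N\<^esub> (b + u * x)"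
  by (simp add: hol_act_def el_def pw_apply apow_pow apow_mult mult.commute)

lemma act_el_one: "hol_act N (el b u) \<one>\<^bsub>N\<^esub> = a [^]\<^bsub>N\<^esub> b"
  by (simp add: hol_act_def el_def pw_apply)

lemma inv_mod: assumes "\<not> int p dvd u" shows "\<exists>u'. [u * u' = 1] (mod n) \<and> \<not> int p dvd u'"
proof -
  obtain u' where u': "[u * u' = 1] (mod n)" using cong_solve_coprime_int[OF n_coprime[OF assms]] by blast
  have "\<not> int p dvd u'"
  proof
    assume "int p dvd u'"
    then have "int p dvd u * u'" by simp
    moreover have "int p dvd u * u' - 1" using u' p_dvd_n by (meson cong_iff_dvd_diff dvd_trans)
    ultimately have "int p dvd u * u' - (u * u' - 1)" by (rule dvd_diff)
    then have "int p dvd 1" by simp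
    then show False using p_gt1 by simp
  qed
  then show ?thesis using u' by blast
qed

lemma ndvd_mult: "\<not> int p dvd u \<Longrightarrow> \<not> int p dvd v \<Longrightarrow> \<not> int p dvd u * v"
  using pp_int by (simp add: prime_dvd_mult_iff)

lemma hol_group: "group (Hol N)"
proof (rule groupI)
  fix x y assume x: "x \<in> carrier (Hol N)" and y: "y \<in> carrier (Hol N)"
  obtain b u where bu: "x = el b u" "\<not> int p dvd u" using carrier_el[OF x] by blast
  obtain c v where cv: "y = el c v" "\<not> int p dvd v" using carrier_el[OF y] by blast
  show "x \<otimes>\<^bsub>Hol N\<^esub> y \<in> carrier (Hol N)"
    using bu cv by (simp add: el_mult el_in ndvd_mult)
next
  show "\<one>\<^bsub>Hol N\<^esub> \<in> carrier (Hol N)" using p_gt1 by (simp add: one_el el_in)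
next
  fix x y z assume x: "x \<in> carrier (Hol N)" and y: "y \<in> carrier (Hol N)" and z: "z \<in> carrier (Hol N)"
  obtain b u where bu: "x = el b u" using carrier_el[OF x] by blast
  obtain c v where cv: "y = el c v" using carrier_el[OF y] by blast
  obtain d w where dw: "z = el d w" using carrier_el[OF z] by blast
  show "x \<otimes>\<^bsub>Hol N\<^esub> y \<otimes>\<^bsub>Hol N\<^esub> z = x \<otimes>\<^bsub>Hol N\<^esub> (y \<otimes>\<^bsub>Hol N\<^esub> z)"
    by (simp add: bu cv dw el_mult algebra_simps)
next
  fix x assume x: "x \<in> carrier (Hol N)"
  obtain b u where bu: "x = el b u" using carrier_el[OF x] by blast
  show "\<one>\<^bsub>Hol N\<^esub> \<otimes>\<^bsub>Hol N\<^esub> x = x" by (simp add: bu one_el el_mult)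
next
  fix x assume x: "x \<in> carrier (Hol N)"
  obtain b u where bu: "x = el b u" "\<not> int p dvd u" using carrier_el[OF x] by blast
  obtain u' where u': "[u * u' = 1] (mod n)" "\<not> int p dvd u'" using inv_mod[OF bu(2)] by blast
  have "el (- (u' * b)) u' \<otimes>\<^bsub>Hol N\<^esub> x = el 0 (u' * u)" by (simp add: bu el_mult)
  also have "\<dots> = \<one>\<^bsub>Hol N\<^esub>" using u'(1) by (simp add: one_el el_eq mult.commute)
  finally show "\<exists>y\<in>carrier (Hol N). y \<otimes>\<^bsub>Hol N\<^esub> x = \<one>\<^bsub>Hol N\<^esub>" using el_in[OF u'(2)] by blast
qed

interpretation Hol: group "Hol N" by (rule hol_group)

lemma el_pow: "el b u [^]\<^bsub>Hol N\<^esub> (k::nat) = el (b * gs k u) (u ^ k)"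
proof (induction k)
  case 0 then show ?case by (simp add: one_el)
next
  case (Suc k)
  have "el b u [^]\<^bsub>Hol N\<^esub> Suc k = el (b * gs k u) (u ^ k) \<otimes>\<^bsub>Hol N\<^esub> el b u"
    by (simp add: Suc)
  also have "\<dots> = el (b * gs (Suc k) u) (u ^ Suc k)"
    by (simp add: el_mult gs_Suc algebra_simps)
  finally show ?case .
qed

lemma inv_el: assumes u: "\<not> int p dvd u"
  shows "\<exists>b' u'. inv\<^bsub>Hol N\<^esub> (el b u) = el b' u' \<and> \<not> int p dvd u' \<and> [u * u' = 1] (mod n)
     \<and> [b + u * b' = 0] (mod n)"
proof -
  have x: "el b u \<in> carrier (Hol N)" using el_in[OF u] .
  obtain b' u' where bu: "inv\<^bsub>Hol N\<^esub> (el b u) = el b' u'" "\<not> int p dvd u'"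
    using carrier_el[OF Hol.inv_closed[OF x]] by blast
  have "el b u \<otimes>\<^bsub>Hol N\<^esub> el b' u' = el 0 1" using Hol.r_inv[OF x] by (simp add: bu one_el)
  then have "[b + u * b' = 0] (mod n) \<and> [u * u' = 1] (mod n)" by (simp add: el_mult el_eq)
  then show ?thesis using bu by blast
qed

lemma act_in: "g \<in> carrier (Hol N) \<Longrightarrow> x \<in> carrier N \<Longrightarrow> hol_act N g x \<in> carrier N"
  by (auto simp: Hol_def hol_act_def auto_def hom_def intro!: N.m_closed)

lemma act_mult:
  assumes g: "g \<in> carrier (Hol N)" and h: "h \<in> carrier (Hol N)" and x: "x \<in> carrier N"
  shows "hol_act N (g \<otimes>\<^bsub>Hol N\<^esub> h) x = hol_act N g (hol_act N h x)"
proof -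
  obtain b u where bu: "g = el b u" using carrier_el[OF g] by blast
  obtain c v where cv: "h = el c v" using carrier_el[OF h] by blast
  obtain k :: int where k: "x = a [^]\<^bsub>N\<^esub> k" using pow_of[OF x] by blast
  show ?thesis by (simp add: bu cv k el_mult act_el algebra_simps)
qed

lemma act_one: "x \<in> carrier N \<Longrightarrow> hol_act N \<one>\<^bsub>Hol N\<^esub> x = x"
  by (simp add: Hol_def hol_act_def)

lemma stab_iff: assumes g: "g \<in> carrier (Hol N)"
  shows "g \<in> {\<one>\<^bsub>N\<^esub>} \<times> auto N \<longleftrightarrow> hol_act N g \<one>\<^bsub>N\<^esub> = \<one>\<^bsub>N\<^esub>"
proof -
  obtain b u where bu: "g = el b u" "\<not> int p dvd u" using carrier_el[OF g] by blast
  have h: "hol_act N g \<one>\<^bsub>N\<^esub> = a [^]\<^bsub>N\<^esub> b" using act_el[of b u 0] by (simp add: bu)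
  have 1: "g \<in> {\<one>\<^bsub>N\<^esub>} \<times> auto N \<longleftrightarrow> a [^]\<^bsub>N\<^esub> b = \<one>\<^bsub>N\<^esub>" using bu by (simp add: el_def pw_auto)
  show ?thesis by (simp only: 1 h)
qed

lemma fix_all: assumes g: "g \<in> carrier (Hol N)" and f: "\<forall>x\<in>carrier N. hol_act N g x = x"
  shows "g = \<one>\<^bsub>Hol N\<^esub>"
proof -
  obtain b u where bu: "g = el b u" using carrier_el[OF g] by blast
  have "hol_act N g \<one>\<^bsub>N\<^esub> = \<one>\<^bsub>N\<^esub>" using f by simp
  then have b0: "[b = 0] (mod n)" by (simp add: bu act_el_one apow_one)
  have "hol_act N g (a [^]\<^bsub>N\<^esub> (1::int)) = a [^]\<^bsub>N\<^esub> (1::int)" using f by simp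
  then have h1: "[b + u = 1] (mod n)" by (simp add: bu act_el apow_eq)
  have c: "[0 + u = b + u] (mod n)" by (rule cong_add[OF cong_sym[OF b0] cong_refl])
  have "[0 + u = 1] (mod n)" by (rule cong_trans[OF c h1])
  then have "[u = 1] (mod n)" by simp
  then show ?thesis using b0 by (simp add: bu one_el el_eq)
qed

end

context cyc begin

interpretation N: comm_group N by (rule cg)
interpretation Hol: group "Hol N" by (rule hol_group)

abbreviation "m \<equiv> p ^ (e - 1) * (p - 1)"

lemma n_split: "n = int p ^ (e - 1) * int p"
  using e1 by (metis Suc_diff_le diff_Suc_1 power_Suc2)

lemma cong_p_dvd: "[u = 1] (mod int p) \<longleftrightarrow> int p dvd u - 1"
  by (simp add: cong_iff_dvd_diff)

lemma euler_u: assumes u: "\<not> int p dvd u" shows "[u ^ m = 1] (mod n)"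
proof -
  have r: "residues n" using n_pos by (simp add: residues_def)
  have "nat n = p ^ e" by (simp add: nat_power_eq)
  then have "totient (nat n) = m" using pp e1 by (simp add: totient_prime_power)
  then show ?thesis using residues.euler_theorem[OF r n_coprime[OF u]] by simp
qed

lemma gs_one: "gs k 1 = int k" by (simp add: gs_def)

lemma gsm_dvd: assumes u: "\<not> int p dvd u" shows "int p ^ (e - 1) dvd gs m u"
proof (cases "[u = 1] (mod int p)")
  case True
  obtain w where w: "gs (p ^ (e - 1)) u = int p ^ (e - 1) * w"
    using gs_ppow[OF pp po True] by blast
  show ?thesis unfolding gs_mult[of "p ^ (e - 1)" "p - 1" u] w by simp
next
  case False
  then have "\<not> int p dvd u - 1" by (simp add: cong_p_dvd)
  then have cop: "coprime n (u - 1)" using n_coprime coprime_commute by blast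
  have "n dvd u ^ m - 1" using euler_u[OF u] by (simp add: cong_iff_dvd_diff)
  then have "n dvd (u - 1) * gs m u" using gs_geom[of u m] by (metis add_diff_cancel_left')
  then have "n dvd gs m u" using cop by (simp add: coprime_dvd_mult_right_iff)
  then show ?thesis using n_split by (metis dvd_mult_left)
qed

lemma gsm_ndvd: assumes u: "[u = 1] (mod int p)" shows "\<not> n dvd gs m u"
proof
  assume d: "n dvd gs m u"
  obtain w where w: "gs (p ^ (e - 1)) u = int p ^ (e - 1) * w" "[w = 1] (mod int p)"
    using gs_ppow[OF pp po u] by blast
  have v: "[u ^ (p ^ (e - 1)) = 1] (mod int p)" using u cong_pow by fastforce
  have s: "[gs (p - 1) (u ^ (p ^ (e - 1))) = int (p - 1)] (mod int p)" by (rule gs_cong1[OF v])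
  have "gs m u = int p ^ (e - 1) * (w * gs (p - 1) (u ^ (p ^ (e - 1))))"
    unfolding gs_mult[of "p ^ (e - 1)" "p - 1" u] w by simp
  then have "int p ^ (e - 1) * int p dvd int p ^ (e - 1) * (w * gs (p - 1) (u ^ (p ^ (e - 1))))"
    using d n_split by simp
  then have "int p dvd w * gs (p - 1) (u ^ (p ^ (e - 1)))" using p_gt1 by simp
  then have "int p dvd w \<or> int p dvd gs (p - 1) (u ^ (p ^ (e - 1)))" using pp_int by (simp add: prime_dvd_mult_iff)
  moreover have "\<not> int p dvd w"
  proof
    assume a1: "int p dvd w"
    have "int p dvd w - 1" using w(2) by (simp add: cong_iff_dvd_diff)
    then have "int p dvd w - (w - 1)" using a1 by (rule dvd_diff[rotated])
    then show False using p_gt1 by simp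
  qed
  moreover have "\<not> int p dvd gs (p - 1) (u ^ (p ^ (e - 1)))"
  proof
    assume a1: "int p dvd gs (p - 1) (u ^ (p ^ (e - 1)))"
    have "int p dvd gs (p - 1) (u ^ (p ^ (e - 1))) - int (p - 1)" using s by (simp add: cong_iff_dvd_diff)
    then have "int p dvd gs (p - 1) (u ^ (p ^ (e - 1))) - (gs (p - 1) (u ^ (p ^ (e - 1))) - int (p - 1))"
      using a1 by (rule dvd_diff[rotated])
    then have "int p dvd int (p - 1)" by simp
    then show False using p_gt1 by (simp add: zdvd_not_zless)
  qed
  ultimately show False by blast
qed

lemma trans_gen: assumes d: "\<not> n dvd d" shows "\<exists>k::nat. [int k * d = int p ^ (e - 1) * z] (mod n)"
proof -
  have d0: "d \<noteq> 0" using d by auto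
  have nu: "\<not> is_unit (int p)" using p_gt1 by simp
  define j where "j = multiplicity (int p) d"
  obtain w where w: "d = int p ^ j * w" "\<not> int p dvd w"
    using multiplicity_decompose'[OF d0 nu] unfolding j_def by blast
  have je: "j < e"
  proof (rule ccontr)
    assume "\<not> j < e"
    then have "n dvd int p ^ j" by (simp add: le_imp_power_dvd)
    then have "n dvd d" unfolding w(1) by (rule dvd_mult2)
    then show False using d by blast
  qed
  have cw: "coprime w (int p)" using w(2) pp_int prime_imp_coprime coprime_commute by blast
  obtain w' where w': "[w * w' = 1] (mod int p)"
    using cong_solve_coprime_int[OF cw] by blast
  define r where "r = (z * w') mod int p"
  have r0: "r \<ge> 0" using p_gt1 by (simp add: r_def)
  define k where "k = p ^ (e - 1 - j) * nat r"
  have "int k * d = int p ^ (e - 1) * (r * w)"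
  proof -
    have "int k * d = int p ^ (e - 1 - j) * r * (int p ^ j * w)" using r0 by (simp add: k_def w(1))
    also have "\<dots> = int p ^ (e - 1 - j + j) * (r * w)" by (simp add: power_add algebra_simps)
    also have "e - 1 - j + j = e - 1" using je by simp
    finally show ?thesis by simp
  qed
  moreover have "[r * w = z] (mod int p)"
  proof -
    have "[r = z * w'] (mod int p)" by (simp add: r_def cong_mod_left)
    then have "[r * w = z * w' * w] (mod int p)" by (rule cong_scalar_right)
    moreover have "[z * w' * w = z * 1] (mod int p)"
      using cong_scalar_left[OF w', of z] by (simp add: mult.assoc mult.commute[of w'])
    ultimately show ?thesis using cong_trans by fastforce
  qed
  then have "int p dvd r * w - z" by (simp add: cong_iff_dvd_diff)
  then have "int p ^ (e - 1) * int p dvd int p ^ (e - 1) * (r * w - z)" by (simp add: mult_dvd_mono)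
  then have "n dvd int p ^ (e - 1) * (r * w - z)" by (simp only: n_split)
  then have "[int p ^ (e - 1) * (r * w) = int p ^ (e - 1) * z] (mod n)"
    by (simp add: cong_iff_dvd_diff right_diff_distrib)
  ultimately have "[int k * d = int p ^ (e - 1) * z] (mod n)" by simp
  then show ?thesis by blast
qed

end

context cyc begin

interpretation N: comm_group N by (rule cg)
interpretation Hol: group "Hol N" by (rule hol_group)

lemma inv_el2: assumes u: "\<not> int p dvd u"
  shows "\<exists>b' u'. inv\<^bsub>Hol N\<^esub> (el b u) = el b' u' \<and> \<not> int p dvd u' \<and> [u * u' = 1] (mod n)
     \<and> [b + u * b' = 0] (mod n) \<and> [u' * u = 1] (mod n) \<and> [b' + u' * b = 0] (mod n)"
proof -
  have x: "el b u \<in> carrier (Hol N)" using el_in[OF u] .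
  obtain b' u' where bu: "inv\<^bsub>Hol N\<^esub> (el b u) = el b' u'" "\<not> int p dvd u'"
    using carrier_el[OF Hol.inv_closed[OF x]] by blast
  have "el b u \<otimes>\<^bsub>Hol N\<^esub> el b' u' = el 0 1" using Hol.r_inv[OF x] by (simp add: bu one_el)
  then have 1: "[b + u * b' = 0] (mod n) \<and> [u * u' = 1] (mod n)" by (simp add: el_mult el_eq)
  have "el b' u' \<otimes>\<^bsub>Hol N\<^esub> el b u = el 0 1" using Hol.l_inv[OF x] by (simp add: bu one_el)
  then have 2: "[b' + u' * b = 0] (mod n) \<and> [u' * u = 1] (mod n)" by (simp add: el_mult el_eq)
  show ?thesis using bu 1 2 by blast
qed

lemma cop_p: "\<not> int p dvd w \<Longrightarrow> coprime (int p) w"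
  using pp_int prime_imp_coprime by blast

lemma cop_p': "\<not> int p dvd w \<Longrightarrow> coprime w (int p)"
  using cop_p coprime_commute by blast

lemma el_pow1: "el b u [^]\<^bsub>Hol N\<^esub> (1::nat) = el b u"
  using el_pow[of b u 1] by (simp add: gs_def)

lemma fixpt_single:
  assumes u: "\<not> int p dvd u"
    and tr: "\<forall>k::nat. \<forall>c. el b u [^]\<^bsub>Hol N\<^esub> k = el c 1 \<longrightarrow> [c = 0] (mod n)"
  shows "\<exists>x::int. [b + u * x = x] (mod n)"
proof (cases "[u = 1] (mod int p)")
  case False
  then have "\<not> int p dvd u - 1" by (simp add: cong_p_dvd)
  then have cop: "coprime (u - 1) n" using n_coprime by blast
  obtain y where y: "[(u - 1) * y = 1] (mod n)" using cong_solve_coprime_int[OF cop] by blast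
  have "n dvd (u - 1) * y - 1" using y by (simp add: cong_iff_dvd_diff)
  then have d: "n dvd (- b) * ((u - 1) * y - 1)" by (rule dvd_mult)
  have eq: "b + u * (- (b * y)) - (- (b * y)) = (- b) * ((u - 1) * y - 1)" by (simp add: algebra_simps)
  have "n dvd b + u * (- (b * y)) - (- (b * y))" unfolding eq by (rule d)
  then have "[b + u * (- (b * y)) = - (b * y)] (mod n)" by (simp only: cong_iff_dvd_diff)
  then show ?thesis by blast
next
  case True
  show ?thesis
  proof (cases "[u = 1] (mod n)")
    case True
    have "el b u [^]\<^bsub>Hol N\<^esub> (1::nat) = el b 1" unfolding el_pow1 using True by (simp add: el_eq)
    then have "[b = 0] (mod n)" using tr by blast
    then have "[b + u * 0 = 0] (mod n)" by simp
    then show ?thesis by blast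
  next
    case False
    have u10: "u - 1 \<noteq> 0" using False by auto
    have nu: "\<not> is_unit (int p)" using p_gt1 by simp
    define j where "j = multiplicity (int p) (u - 1)"
    obtain w where w: "u - 1 = int p ^ j * w" "\<not> int p dvd w"
      using multiplicity_decompose'[OF u10 nu] unfolding j_def by blast
    have pu: "int p dvd u - 1" using True by (simp add: cong_p_dvd)
    have j1: "j \<ge> 1"
    proof (rule ccontr)
      assume "\<not> j \<ge> 1" then have "j = 0" by simp
      then show False using w pu by simp
    qed
    have je: "j < e"
    proof (rule ccontr)
      assume "\<not> j < e"
      then have "n dvd int p ^ j" by (simp add: le_imp_power_dvd)
      then have "n dvd u - 1" unfolding w(1) by (rule dvd_mult2)
      then show False using False by (simp add: cong_iff_dvd_diff)
    qed
    define K where "K = p ^ (e - j)"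
    obtain w' where w': "gs K u = int p ^ (e - j) * w'" "[w' = 1] (mod int p)"
      using gs_ppow[OF pp po True] unfolding K_def by blast
    have w'p: "\<not> int p dvd w'"
    proof
      assume a1: "int p dvd w'"
      have "int p dvd w' - 1" using w'(2) by (simp add: cong_iff_dvd_diff)
      then have "int p dvd w' - (w' - 1)" using a1 by (rule dvd_diff[rotated])
      then show False using p_gt1 by simp
    qed
    have pj: "int p ^ j * int p ^ (e - j) = n" using je by (simp add: power_add[symmetric])
    have "u ^ K - 1 = (u - 1) * gs K u" using gs_geom[of u K] by simp
    also have "\<dots> = n * (w * w')" by (simp add: w(1) w'(1) pj[symmetric] algebra_simps)
    finally have uK: "[u ^ K = 1] (mod n)" by (simp add: cong_iff_dvd_diff)
    have "el b u [^]\<^bsub>Hol N\<^esub> K = el (b * gs K u) 1" using uK by (simp add: el_pow el_eq)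
    then have "[b * gs K u = 0] (mod n)" using tr by blast
    then have "int p ^ (e - j) * int p ^ j dvd int p ^ (e - j) * (b * w')"
      using pj by (simp add: cong_0_iff w'(1) algebra_simps)
    then have "int p ^ j dvd b * w'" using p_gt1 by simp
    moreover have "coprime (int p ^ j) w'"
    proof -
      have "coprime (int p) w'" using w'p pp_int prime_imp_coprime by blast
      then show ?thesis by simp
    qed
    ultimately have "int p ^ j dvd b" by (simp add: coprime_dvd_mult_left_iff)
    then obtain b1 where b1: "b = int p ^ j * b1" by blast
    have "coprime w (int p ^ (e - j))" using cop_p'[OF w(2)] by simp
    then obtain w2 where w2: "[w * w2 = 1] (mod int p ^ (e - j))" using cong_solve_coprime_int by blast
    have "int p ^ (e - j) dvd w * w2 - 1" using w2 by (simp add: cong_iff_dvd_diff)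
    then have d: "int p ^ j * int p ^ (e - j) dvd int p ^ j * (- b1 * (w * w2 - 1))" by (simp add: mult_dvd_mono)
    have eq: "b + u * (- (b1 * w2)) - (- (b1 * w2)) = int p ^ j * (- b1 * (w * w2 - 1))"
    proof -
      have "u = 1 + int p ^ j * w" using w(1) by simp
      then show ?thesis by (simp add: b1 algebra_simps)
    qed
    have "n dvd b + u * (- (b1 * w2)) - (- (b1 * w2))" unfolding eq pj[symmetric] by (rule d)
    then have "[b + u * (- (b1 * w2)) = - (b1 * w2)] (mod n)" by (simp only: cong_iff_dvd_diff)
    then show ?thesis by blast
  qed
qed

lemma powm_trans: assumes g: "g \<in> carrier (Hol N)"
  shows "\<exists>c. g [^]\<^bsub>Hol N\<^esub> m = el (int p ^ (e - 1) * c) 1"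
proof -
  obtain b u where bu: "g = el b u" "\<not> int p dvd u" using carrier_el[OF g] by blast
  obtain c where c: "gs m u = int p ^ (e - 1) * c" using gsm_dvd[OF bu(2)] by blast
  have "g [^]\<^bsub>Hol N\<^esub> m = el (b * gs m u) (u ^ m)" by (simp only: bu el_pow)
  also have "b * gs m u = int p ^ (e - 1) * (b * c)" by (simp only: c) (simp add: algebra_simps)
  also have "el (int p ^ (e - 1) * (b * c)) (u ^ m) = el (int p ^ (e - 1) * (b * c)) 1"
    using euler_u[OF bu(2)] by (simp only: el_eq cong_refl simp_thms)
  finally have "g [^]\<^bsub>Hol N\<^esub> m = el (int p ^ (e - 1) * (b * c)) 1" .
  then show ?thesis by blast
qed

lemma conj_trans: assumes g: "g \<in> carrier (Hol N)"
  shows "\<exists>v. \<not> int p dvd v \<and> (\<forall>z. inv\<^bsub>Hol N\<^esub> g \<otimes>\<^bsub>Hol N\<^esub> el z 1 \<otimes>\<^bsub>Hol N\<^esub> g = el (v * z) 1)"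
proof -
  obtain b u where bu: "g = el b u" "\<not> int p dvd u" using carrier_el[OF g] by blast
  obtain b' u' where i: "inv\<^bsub>Hol N\<^esub> (el b u) = el b' u'" "\<not> int p dvd u'"
    "[u' * u = 1] (mod n)" "[b' + u' * b = 0] (mod n)"
    using inv_el2[OF bu(2)] by blast
  have "inv\<^bsub>Hol N\<^esub> g \<otimes>\<^bsub>Hol N\<^esub> el z 1 \<otimes>\<^bsub>Hol N\<^esub> g = el (u' * z) 1" for z
  proof -
    have "inv\<^bsub>Hol N\<^esub> g \<otimes>\<^bsub>Hol N\<^esub> el z 1 \<otimes>\<^bsub>Hol N\<^esub> g = el (u' * z + (b' + u' * b)) (u' * u)"
      by (simp add: bu i(1) el_mult algebra_simps)
    also have "\<dots> = el (u' * z) 1"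
    proof -
      have "[u' * z + (b' + u' * b) = u' * z + 0] (mod n)" by (rule cong_add[OF cong_refl i(4)])
      then show ?thesis using i(3) by (simp add: el_eq)
    qed
    finally show ?thesis .
  qed
  then show ?thesis using i(2) by blast
qed

end

lemma Dlem: "\<lbrakk>v * v' = 1 + n * k1; ys + v * ys' = n * k2; 1 + u * tb' = n * k4; ys + v * c0 = c0 + 1 + n * k5; (1 - u) * c0 = 1 + n * k6\<rbrakk>
  \<Longrightarrow> ys + v + v * u * ys' + v * u * v' * tb' = 1 - u + n * (k6 - v * k6 + (1 - u) * k5 + u * k2 + k4 + n * k1 * k4 - k1)"
  for v v' n k1 ys ys' k2 u tb' k4 c0 k5 k6 :: int
proof -
  assume e1: "v * v' = 1 + n * k1" and e2: "ys + v * ys' = n * k2" and e4: "1 + u * tb' = n * k4"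
    and e5: "ys + v * c0 = c0 + 1 + n * k5" and e6: "(1 - u) * c0 = 1 + n * k6"
  have e2': "v * ys' = n * k2 - ys" using e2 by simp
  have e4': "u * tb' = n * k4 - 1" using e4 by simp
  have e5': "ys = c0 + 1 + n * k5 - v * c0" using e5 by simp
  have "ys + v + v * u * ys' + v * u * v' * tb' = ys + v + u * (v * ys') + (v * v') * (u * tb')"
    by (simp add: algebra_simps)
  also have "\<dots> = ys + v + u * (n * k2 - ys) + (1 + n * k1) * (n * k4 - 1)" by (simp only: e1 e2' e4')
  also have "\<dots> = 1 - u + n * (k6 - v * k6 + (1 - u) * k5 + u * k2 + k4 + n * k1 * k4 - k1) + (1 - v) * ((1 - u) * c0 - 1 - n * k6)"
    by (simp add: e5' algebra_simps)
  also have "(1 - u) * c0 - 1 - n * k6 = 0" using e6 by simp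
  finally show ?thesis by simp
qed

context cyc begin

interpretation N: comm_group N by (rule cg)
interpretation Hol: group "Hol N" by (rule hol_group)

lemma sub_pow: "subgroup H (Hol N) \<Longrightarrow> x \<in> H \<Longrightarrow> x [^]\<^bsub>Hol N\<^esub> (k::nat) \<in> H"
  by (induction k) (auto intro: subgroup.one_closed subgroup.m_closed)

lemma m_pos: "m > 0" using p_gt1 by simp

lemma int_m: "int m = int p ^ (e - 1) * (int p - 1)" using p_gt1 by (simp add: of_nat_diff)

lemma trans_elem: assumes T: "subgroup T (Hol N)" and tr: "hol_transitive N T"
  shows "\<exists>t\<in>T. t [^]\<^bsub>Hol N\<^esub> m \<noteq> \<one>\<^bsub>Hol N\<^esub>"
proof -
  interpret T: subgroup T "Hol N" by (rule T)
  obtain t where t: "t \<in> T" "hol_act N t \<one>\<^bsub>N\<^esub> = a"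
    using tr a_in N.one_closed unfolding hol_transitive_def by blast
  have tc: "t \<in> carrier (Hol N)" using t(1) T.subset by blast
  obtain b u where bu: "t = el b u" "\<not> int p dvd u" using carrier_el[OF tc] by blast
  have "a [^]\<^bsub>N\<^esub> b = a [^]\<^bsub>N\<^esub> (1::int)" using t(2) a_in by (simp add: bu act_el_one)
  then have "[b = 1] (mod n)" by (simp only: apow_eq)
  then have t1: "t = el 1 u" by (simp add: bu el_eq)
  show ?thesis
  proof (cases "[u = 1] (mod int p)")
    case True
    have "t [^]\<^bsub>Hol N\<^esub> m = el (1 * gs m u) (u ^ m)" by (simp only: t1 el_pow)
    also have "\<dots> = el (gs m u) 1" using euler_u[OF bu(2)] by (simp add: el_eq)
    also have "\<dots> \<noteq> el 0 1" using gsm_ndvd[OF True] by (simp add: el_eq cong_0_iff)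
    finally show ?thesis using t(1) one_el by auto
  next
    case False
    then have np: "\<not> int p dvd 1 - u" by (simp add: cong_p_dvd dvd_diff_commute)
    have cop: "coprime (1 - u) n" using n_coprime[OF np] .
    obtain c0 where c0: "[(1 - u) * c0 = 1] (mod n)" using cong_solve_coprime_int[OF cop] by blast
    obtain s where s: "s \<in> T" "hol_act N s (a [^]\<^bsub>N\<^esub> c0) = a [^]\<^bsub>N\<^esub> (c0 + 1)"
      using tr unfolding hol_transitive_def by (meson apow_in)
    have sc: "s \<in> carrier (Hol N)" using s(1) T.subset by blast
    obtain ys v where sv: "s = el ys v" "\<not> int p dvd v" using carrier_el[OF sc] by blast
    have e5: "[ys + v * c0 = c0 + 1] (mod n)" using s(2) by (simp add: sv act_el apow_eq)
    obtain ys' v' where isv: "inv\<^bsub>Hol N\<^esub> s = el ys' v'" "[v * v' = 1] (mod n)" "[ys + v * ys' = 0] (mod n)"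
      using inv_el2[OF sv(2)] sv(1) by blast
    obtain tb' u'' where it: "inv\<^bsub>Hol N\<^esub> t = el tb' u''" "[u * u'' = 1] (mod n)" "[1 + u * tb' = 0] (mod n)"
      using inv_el2[OF bu(2), of 1] t1 by blast
    define q where "q = s \<otimes>\<^bsub>Hol N\<^esub> t \<otimes>\<^bsub>Hol N\<^esub> inv\<^bsub>Hol N\<^esub> s \<otimes>\<^bsub>Hol N\<^esub> inv\<^bsub>Hol N\<^esub> t"
    have qT: "q \<in> T" unfolding q_def using s(1) t(1) by (intro T.m_closed T.m_inv_closed)
    have q1: "q = el (ys + v + v * u * ys' + v * u * v' * tb') (v * u * v' * u'')"
      unfolding q_def isv(1) it(1) unfolding sv(1) t1 by (simp add: el_mult algebra_simps)
    have U: "[v * u * v' * u'' = 1] (mod n)"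
    proof -
      have "[(v * v') * (u * u'') = 1 * 1] (mod n)" by (rule cong_mult[OF isv(2) it(2)])
      then show ?thesis by (simp add: algebra_simps)
    qed
    obtain k1 where k1: "v * v' = 1 + n * k1" using cong_ex[OF isv(2)] by blast
    obtain k2 where k2: "ys + v * ys' = 0 + n * k2" using cong_ex[OF isv(3)] by blast
    obtain k4 where k4: "1 + u * tb' = 0 + n * k4" using cong_ex[OF it(3)] by blast
    obtain k5 where k5: "ys + v * c0 = c0 + 1 + n * k5" using cong_ex[OF e5] by blast
    obtain k6 where k6: "(1 - u) * c0 = 1 + n * k6" using cong_ex[OF c0] by blast
    have "ys + v + v * u * ys' + v * u * v' * tb' = 1 - u + n * (k6 - v * k6 + (1 - u) * k5 + u * k2 + k4 + n * k1 * k4 - k1)"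
      by (rule Dlem) (use k1 k2 k4 k5 k6 in simp_all)
    then have D: "[ys + v + v * u * ys' + v * u * v' * tb' = 1 - u] (mod n)"
      by (simp add: cong_iff_dvd_diff)
    have q2: "q = el (1 - u) 1" using q1 D U by (simp add: el_eq)
    have "q [^]\<^bsub>Hol N\<^esub> m = el ((1 - u) * gs m 1) 1" by (simp only: q2 el_pow power_one)
    also have "\<dots> \<noteq> el 0 1"
    proof
      assume "el ((1 - u) * gs m 1) 1 = el 0 1"
      then have "n dvd (1 - u) * int m" by (simp add: el_eq cong_0_iff gs_one)
      then have "int p ^ (e - 1) * int p dvd int p ^ (e - 1) * ((1 - u) * (int p - 1))"
        by (simp only: n_split int_m) (simp add: algebra_simps)
      then have "int p dvd (1 - u) * (int p - 1)" using p_gt1 by simp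
      then have "int p dvd (1 - u) \<or> int p dvd int p - 1" using pp_int by (simp add: prime_dvd_mult_iff)
      moreover have "\<not> int p dvd int p - 1"
      proof
        assume "int p dvd int p - 1"
        then have "int p dvd int p - (int p - 1)" by (rule dvd_diff[rotated]) simp
        then show False using p_gt1 by simp
      qed
      ultimately show False using np by blast
    qed
    finally show ?thesis using qT one_el by auto
  qed
qed

end

context cyc begin

interpretation N: comm_group N by (rule cg)
interpretation Hol: group "Hol N" by (rule hol_group)

lemma act_pow: assumes h: "h \<in> carrier (Hol N)" and x: "x \<in> carrier N" and f: "hol_act N h x = x"
  shows "hol_act N (h [^]\<^bsub>Hol N\<^esub> (k::nat)) x = x"
proof (induction k)
  case 0 then show ?case using x by (simp add: act_one)
next
  case (Suc k)
  have "hol_act N (h [^]\<^bsub>Hol N\<^esub> Suc k) x = hol_act N (h [^]\<^bsub>Hol N\<^esub> k) (hol_act N h x)"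
    using act_mult[OF Hol.nat_pow_closed[OF h] h x] by simp
  then show ?case using f Suc by simp
qed

lemma unit_pow:
  assumes g: "residue_primroot (p ^ e) g" and u: "\<not> int p dvd u"
  shows "\<exists>i. [u = int g ^ i] (mod n)"
proof -
  have pe: "p ^ e > 1" using p_gt1 e1 by (intro one_less_power) auto
  have bij: "bij_betw (\<lambda>i. g ^ i mod p ^ e) {..<totient (p ^ e)} (totatives (p ^ e))"
    by (rule residue_primroot_is_generator[OF pe g])
  define r where "r = nat (u mod n)"
  have n0: "n > 0" using p_gt1 by simp
  have rr: "int r = u mod n" using n0 by (simp add: r_def)
  have nd: "\<not> n dvd u" using u p_dvd_n dvd_trans by blast
  have "u mod n \<noteq> 0" using nd dvd_eq_mod_eq_0 by blast
  moreover have "u mod n \<ge> 0" using n0 by simp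
  ultimately have "u mod n > 0" by linarith
  then have r0: "r > 0" by (simp add: r_def)
  have "u mod n < n" using n0 by simp
  then have "int r \<le> int (p ^ e)" using rr by simp
  then have r1: "r \<le> p ^ e" by (simp only: of_nat_le_iff)
  have "coprime (u mod n) n" using n_coprime[OF u] n0 coprime_mod_left_iff[of n u] by linarith
  then have "coprime (int r) (int (p ^ e))" using rr by simp
  then have "coprime r (p ^ e)" by (simp only: coprime_int_iff)
  then have "r \<in> totatives (p ^ e)" using r0 r1 by (simp add: totatives_def)
  then have "r \<in> (\<lambda>i. g ^ i mod p ^ e) ` {..<totient (p ^ e)}" using bij by (simp add: bij_betw_def)
  then obtain i where i: "g ^ i mod p ^ e = r" by blast
  have "int g ^ i mod n = u mod n"
  proof -
    have "int (g ^ i mod p ^ e) = int g ^ i mod n" by (simp add: zmod_int)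
    then show ?thesis using i rr by simp
  qed
  then have "[u = int g ^ i] (mod n)" by (simp add: cong_def)
  then show ?thesis by blast
qed

lemma ndvd_pow: assumes u: "\<not> int p dvd u" shows "\<not> int p dvd u ^ k"
proof (induction k)
  case 0 show ?case using p_gt1 by simp
next
  case (Suc k) show ?case using ndvd_mult[OF u Suc.IH] by (simp add: power_Suc)
qed

lemma fix_common:
  assumes H: "subgroup H (Hol N)" and tr: "\<forall>h\<in>H. \<forall>c. h = el c 1 \<longrightarrow> [c = 0] (mod n)"
  shows "\<exists>x\<in>carrier N. \<forall>h\<in>H. hol_act N h x = x"
proof -
  interpret H: subgroup H "Hol N" by (rule H)
  obtain g where g0: "\<forall>k>0. residue_primroot (p ^ k) g"
    using residue_primroot_odd_prime_power_exists[OF pp po] by blast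
  have g: "residue_primroot (p ^ e) g" using g0 e1 by simp
  have gp: "\<not> int p dvd int g"
  proof
    assume "int p dvd int g"
    then have pg: "p dvd g" by simp
    have cg: "coprime (p ^ e) g" using g by (simp add: residue_primroot_def)
    have "coprime p g \<or> e = 0" using cg coprime_power_left_iff[of p e g] by blast
    then have cpg: "coprime p g" using e1 by auto
    have "is_unit p" by (rule coprime_common_divisor[OF cpg dvd_refl pg])
    then show False using p_gt1 by simp
  qed
  have gm: "[int g ^ m = 1] (mod n)" using euler_u[OF gp] .
  define K where "K = {i. \<exists>c. el c (int g ^ i) \<in> H}"
  have "el 0 (int g ^ 0) \<in> H" using H.one_closed one_el by simp
  then have K0: "0 \<in> K" unfolding K_def by blast
  have Kadd: "i + j \<in> K" if iK: "i \<in> K" and jK: "j \<in> K" for i j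
  proof -
    obtain c c' where "el c (int g ^ i) \<in> H" "el c' (int g ^ j) \<in> H" using iK jK unfolding K_def by blast
    then have "el c (int g ^ i) \<otimes>\<^bsub>Hol N\<^esub> el c' (int g ^ j) \<in> H" by (rule H.m_closed)
    then have "el (c + int g ^ i * c') (int g ^ (i + j)) \<in> H" by (simp add: el_mult power_add)
    then show ?thesis unfolding K_def by blast
  qed
  have Kmult: "q * d \<in> K" if "d \<in> K" for q d
    using that by (induction q) (simp_all add: K0 Kadd)
  have Kmod: "j \<in> K" if iK: "i \<in> K" and ij: "[int g ^ i = int g ^ j] (mod n)" for i j
  proof -
    obtain c where "el c (int g ^ i) \<in> H" using iK unfolding K_def by blast
    moreover have "el c (int g ^ i) = el c (int g ^ j)" using ij by (simp add: el_eq)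
    ultimately have "el c (int g ^ j) \<in> H" by simp
    then show ?thesis unfolding K_def by blast
  qed
  have Km: "m \<in> K" by (rule Kmod[OF K0]) (use cong_sym[OF gm] in simp)
  define d where "d = (LEAST i. 0 < i \<and> i \<in> K)"
  have d: "0 < d \<and> d \<in> K" unfolding d_def by (rule LeastI[of _ m]) (use m_pos Km in simp)
  have dmin: "d \<le> i" if "0 < i" "i \<in> K" for i unfolding d_def by (rule Least_le) (use that in simp)
  have ddvd: "d dvd i" if iK: "i \<in> K" for i
  proof -
    define q where "q = i div d"
    define r where "r = i mod d"
    have i: "i = q * d + r" by (simp add: q_def r_def)
    obtain M where mM: "m = Suc M" using m_pos gr0_implies_Suc by blast
    have "i + (q * M) * d \<in> K" by (rule Kadd[OF iK Kmult]) (use d in simp)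
    moreover have "i + (q * M) * d = r + (q * d) * m" unfolding i mM by (simp add: algebra_simps)
    ultimately have K1: "r + (q * d) * m \<in> K" by simp
    have "[int g ^ (r + (q * d) * m) = int g ^ r] (mod n)"
    proof -
      have "[(int g ^ m) ^ (q * d) = 1 ^ (q * d)] (mod n)" by (rule cong_pow[OF gm])
      then have "[int g ^ r * (int g ^ m) ^ (q * d) = int g ^ r * 1 ^ (q * d)] (mod n)" by (rule cong_scalar_left)
      then show ?thesis by (simp add: power_add power_mult[symmetric] mult.commute)
    qed
    then have rK: "r \<in> K" by (rule Kmod[OF K1])
    have rd: "r < d" using d by (simp add: r_def)
    have "r = 0"
    proof (rule ccontr)
      assume "r \<noteq> 0"
      then have "d \<le> r" using dmin rK by simp
      then show False using rd by simp
    qed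
    then show ?thesis by (simp add: r_def dvd_eq_mod_eq_0)
  qed
  obtain cd where hdH: "el cd (int g ^ d) \<in> H" using d unfolding K_def by blast
  define hd where "hd = el cd (int g ^ d)"
  have gd: "\<not> int p dvd int g ^ d" by (rule ndvd_pow[OF gp])
  have hdc: "hd \<in> carrier (Hol N)" unfolding hd_def by (rule el_in[OF gd])
  have "\<exists>x::int. [cd + int g ^ d * x = x] (mod n)"
  proof (rule fixpt_single[OF gd], intro allI impI)
    fix k :: nat and c assume "el cd (int g ^ d) [^]\<^bsub>Hol N\<^esub> k = el c 1"
    moreover have "el cd (int g ^ d) [^]\<^bsub>Hol N\<^esub> k \<in> H" by (rule sub_pow[OF H hdH])
    ultimately show "[c = 0] (mod n)" using tr by blast
  qed
  then obtain x where x: "[cd + int g ^ d * x = x] (mod n)" by blast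
  define pt where "pt = a [^]\<^bsub>N\<^esub> (x::int)"
  have pt: "pt \<in> carrier N" by (simp add: pt_def)
  have hdX: "hol_act N hd pt = pt" unfolding hd_def pt_def act_el apow_eq by (rule x)
  show ?thesis
  proof (intro bexI ballI)
    fix h assume hH: "h \<in> H"
    have hc: "h \<in> carrier (Hol N)" using hH H.subset by blast
    obtain c u where cu: "h = el c u" "\<not> int p dvd u" using carrier_el[OF hc] by blast
    obtain i where i: "[u = int g ^ i] (mod n)" using unit_pow[OF g cu(2)] by blast
    have h2: "h = el c (int g ^ i)" using cu(1) i by (simp add: el_eq)
    have "i \<in> K" using hH h2 unfolding K_def by blast
    then obtain q where q: "i = d * q" using ddvd by (auto elim: dvdE)
    define y where "y = hd [^]\<^bsub>Hol N\<^esub> q"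
    have yH: "y \<in> H" unfolding y_def hd_def by (rule sub_pow[OF H hdH])
    have yc: "y \<in> carrier (Hol N)" using yH H.subset by blast
    have y: "y = el (cd * gs q (int g ^ d)) (int g ^ i)" by (simp add: y_def hd_def el_pow q power_mult)
    define z where "z = inv\<^bsub>Hol N\<^esub> y \<otimes>\<^bsub>Hol N\<^esub> h"
    have zH: "z \<in> H" unfolding z_def using yH hH by (intro H.m_closed H.m_inv_closed)
    have zc: "z \<in> carrier (Hol N)" using zH H.subset by blast
    obtain cz uz where zz: "z = el cz uz" using carrier_el[OF zc] by blast
    have yz: "y \<otimes>\<^bsub>Hol N\<^esub> z = h" unfolding z_def using yc hc
      by (simp add: Hol.m_assoc[symmetric] Hol.r_inv)
    then have "el (cd * gs q (int g ^ d) + int g ^ i * cz) (int g ^ i * uz) = el c (int g ^ i)"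
      by (simp add: y zz el_mult h2)
    then have "[int g ^ i * uz = int g ^ i * 1] (mod n)" by (simp add: el_eq)
    moreover have "coprime (int g ^ i) n" by (rule n_coprime[OF ndvd_pow[OF gp]])
    ultimately have "[uz = 1] (mod n)" using cong_mult_lcancel by blast
    then have "z = el cz 1" using zz by (simp add: el_eq)
    then have "[cz = 0] (mod n)" using tr zH by blast
    then have "z = \<one>\<^bsub>Hol N\<^esub>" using \<open>z = el cz 1\<close> by (simp add: one_el el_eq)
    then have "h = y" using yz yc by simp
    then show "hol_act N h pt = pt" unfolding y_def by (rule ssubst) (rule act_pow[OF hdc pt hdX])
  qed (rule pt)
qed

end

context group begin

lemma hq_c1: "g \<in> carrier G \<Longrightarrow> s \<in> carrier G \<Longrightarrow> inv g \<otimes> (g \<otimes> s) = s"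
  by (simp add: m_assoc[symmetric])
lemma hq_c2: "g \<in> carrier G \<Longrightarrow> s \<in> carrier G \<Longrightarrow> g \<otimes> (inv g \<otimes> s) = s"
  by (simp add: m_assoc[symmetric])
lemma hq_conj1: "g \<in> carrier G \<Longrightarrow> s \<in> carrier G \<Longrightarrow> inv g \<otimes> (g \<otimes> s \<otimes> inv g) \<otimes> g = s"
  by (simp add: m_assoc hq_c1 hq_c2)
lemma hq_conj2: "g \<in> carrier G \<Longrightarrow> x \<in> carrier G \<Longrightarrow> g \<otimes> (inv g \<otimes> x \<otimes> g) \<otimes> inv g = x"
  by (simp add: m_assoc hq_c1 hq_c2)
lemma hq_conj3: "g' \<in> carrier G \<Longrightarrow> g0 \<in> carrier G \<Longrightarrow> x \<in> carrier G \<Longrightarrow>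
    inv g0 \<otimes> (inv (g' \<otimes> inv g0) \<otimes> x \<otimes> (g' \<otimes> inv g0)) \<otimes> g0 = inv g' \<otimes> x \<otimes> g'"
  by (simp add: m_assoc inv_mult_group hq_c1 hq_c2)
lemma hq_conj4: "g \<in> carrier G \<Longrightarrow> x \<in> carrier G \<Longrightarrow> y \<in> carrier G \<Longrightarrow>
    inv g \<otimes> (x \<otimes> y) \<otimes> g = (inv g \<otimes> x \<otimes> g) \<otimes> (inv g \<otimes> y \<otimes> g)"
  by (simp add: m_assoc hq_c1 hq_c2)
lemma hq_conj5: "g \<in> carrier G \<Longrightarrow> x \<in> carrier G \<Longrightarrow> h \<in> carrier G \<Longrightarrow>
    inv g \<otimes> (x \<otimes> h \<otimes> inv x) \<otimes> g = inv (inv x \<otimes> g) \<otimes> h \<otimes> (inv x \<otimes> g)"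
  by (simp add: m_assoc inv_mult_group hq_c1 hq_c2)
lemma hq_conj6: "g \<in> carrier G \<Longrightarrow> x \<in> carrier G \<Longrightarrow>
    inv g \<otimes> inv x \<otimes> g = inv (inv g \<otimes> x \<otimes> g)"
  by (simp add: m_assoc inv_mult_group hq_c1 hq_c2)

lemma hq_conj_set: assumes g: "g \<in> carrier G" and S: "S \<subseteq> carrier G"
  shows "(g <# S) #> inv g = {x \<in> carrier G. inv g \<otimes> x \<otimes> g \<in> S}"
proof
  show "(g <# S) #> inv g \<subseteq> {x \<in> carrier G. inv g \<otimes> x \<otimes> g \<in> S}"
    using g S by (auto simp: l_coset_def r_coset_def hq_conj1)
next
  show "{x \<in> carrier G. inv g \<otimes> x \<otimes> g \<in> S} \<subseteq> (g <# S) #> inv g"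
  proof
    fix x assume x: "x \<in> {x \<in> carrier G. inv g \<otimes> x \<otimes> g \<in> S}"
    then have "x = g \<otimes> (inv g \<otimes> x \<otimes> g) \<otimes> inv g" using g by (simp add: hq_conj2)
    then show "x \<in> (g <# S) #> inv g" using x by (auto simp: l_coset_def r_coset_def)
  qed
qed

lemma hq_conj_img: "(g <# S) #> inv g = (\<lambda>s. g \<otimes> s \<otimes> inv g) ` S"
  by (auto simp: l_coset_def r_coset_def)

lemma hq_lr_assoc: "g \<in> carrier G \<Longrightarrow> x \<in> carrier G \<Longrightarrow> S \<subseteq> carrier G \<Longrightarrow> g <# (S #> x) = (g <# S) #> x"
  by (auto simp: l_coset_def r_coset_def m_assoc) (metis m_assoc subsetD)+

end

lemma pow_upd: "x [^]\<^bsub>G\<lparr>carrier := S\<rparr>\<^esub> (k::nat) = x [^]\<^bsub>G\<^esub> k"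
  by (induction k) simp_all

lemma lcos_upd: "g <#\<^bsub>G\<lparr>carrier := S\<rparr>\<^esub> H = g <#\<^bsub>G\<^esub> H"
  by (simp add: l_coset_def)
lemma rcos_upd: "H #>\<^bsub>G\<lparr>carrier := S\<rparr>\<^esub> g = H #>\<^bsub>G\<^esub> g"
  by (simp add: r_coset_def)


context cyc begin

interpretation N: comm_group N by (rule cg)
interpretation Hol: group "Hol N" by (rule hol_group)

lemma card_N: "card (carrier N) = p ^ e"
proof -
  have "generate N {a} = carrier N" using N.generate_pow[OF a_in] gen by auto
  then show ?thesis using N.generate_pow_card[OF a_in] ord_a by simp
qed

lemma finite_Hol: "finite (carrier (Hol N))"
proof -
  have "carrier (Hol N) \<subseteq> (\<lambda>(b, u). el b u) ` ({0..<n} \<times> {0..<n})"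
  proof
    fix g assume g: "g \<in> carrier (Hol N)"
    obtain b u where bu: "g = el b u" using carrier_el[OF g] by blast
    have "g = el (b mod n) (u mod n)" by (simp add: bu el_eq cong_def)
    moreover have "(b mod n, u mod n) \<in> {0..<n} \<times> {0..<n}"
    proof -
      have n0: "0 < n" using n_pos by linarith
      then show ?thesis by (simp add: pos_mod_bound pos_mod_sign)
    qed
    ultimately show "g \<in> (\<lambda>(b, u). el b u) ` ({0..<n} \<times> {0..<n})" by force
  qed
  then show ?thesis by (rule finite_subset) simp
qed

lemma card_stab:
  assumes G: "subgroup G (Hol N)" and trG: "hol_transitive N G"
  shows "card G = p ^ e * card (hol_stab N G)"
proof -
  interpret G: subgroup G "Hol N" by (rule G)
  define S where "S = hol_stab N G"
  have S: "S = {s \<in> G. hol_act N s \<one>\<^bsub>N\<^esub> = \<one>\<^bsub>N\<^esub>}"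
    unfolding S_def hol_stab_def using stab_iff G.subset by blast
  have ex: "\<exists>g\<in>G. hol_act N g \<one>\<^bsub>N\<^esub> = y" if "y \<in> carrier N" for y
    using trG that N.one_closed unfolding hol_transitive_def by blast
  define r where "r y = (SOME g. g \<in> G \<and> hol_act N g \<one>\<^bsub>N\<^esub> = y)" for y
  have r: "r y \<in> G \<and> hol_act N (r y) \<one>\<^bsub>N\<^esub> = y" if "y \<in> carrier N" for y
    unfolding r_def by (rule someI_ex) (use ex[OF that] in blast)
  have bij: "bij_betw (\<lambda>(y, s). r y \<otimes>\<^bsub>Hol N\<^esub> s) (carrier N \<times> S) G"
  proof (rule bij_betwI')
    fix ys1 ys2 assume 1: "ys1 \<in> carrier N \<times> S" and 2: "ys2 \<in> carrier N \<times> S"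
    obtain y1 s1 where y1: "ys1 = (y1, s1)" "y1 \<in> carrier N" "s1 \<in> S" using 1 by blast
    obtain y2 s2 where y2: "ys2 = (y2, s2)" "y2 \<in> carrier N" "s2 \<in> S" using 2 by blast
    have c: "r y1 \<in> carrier (Hol N)" "r y2 \<in> carrier (Hol N)" "s1 \<in> carrier (Hol N)" "s2 \<in> carrier (Hol N)"
      using r y1 y2 S G.subset by auto
    have a1: "hol_act N (r y1 \<otimes>\<^bsub>Hol N\<^esub> s1) \<one>\<^bsub>N\<^esub> = y1"
      using act_mult[OF c(1) c(3) N.one_closed] r[OF y1(2)] y1(3) S by simp
    have a2: "hol_act N (r y2 \<otimes>\<^bsub>Hol N\<^esub> s2) \<one>\<^bsub>N\<^esub> = y2"
      using act_mult[OF c(2) c(4) N.one_closed] r[OF y2(2)] y2(3) S by simp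
    show "((\<lambda>(y, s). r y \<otimes>\<^bsub>Hol N\<^esub> s) ys1 = (\<lambda>(y, s). r y \<otimes>\<^bsub>Hol N\<^esub> s) ys2) = (ys1 = ys2)"
    proof
      assume eq: "(\<lambda>(y, s). r y \<otimes>\<^bsub>Hol N\<^esub> s) ys1 = (\<lambda>(y, s). r y \<otimes>\<^bsub>Hol N\<^esub> s) ys2"
      then have e: "r y1 \<otimes>\<^bsub>Hol N\<^esub> s1 = r y2 \<otimes>\<^bsub>Hol N\<^esub> s2" using y1 y2 by simp
      then have "y1 = y2" using a1 a2 by simp
      then show "ys1 = ys2" using e c y1 y2 by simp
    qed simp
  next
    fix ys assume "ys \<in> carrier N \<times> S"
    then obtain y s where ys: "ys = (y, s)" "y \<in> carrier N" "s \<in> S" by blast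
    then show "(\<lambda>(y, s). r y \<otimes>\<^bsub>Hol N\<^esub> s) ys \<in> G" using r S by (auto intro: G.m_closed)
  next
    fix g assume g: "g \<in> G"
    have gc: "g \<in> carrier (Hol N)" using g G.subset by blast
    define y where "y = hol_act N g \<one>\<^bsub>N\<^esub>"
    have y: "y \<in> carrier N" unfolding y_def by (rule act_in[OF gc N.one_closed])
    have ryc: "r y \<in> carrier (Hol N)" using r[OF y] G.subset by blast
    define s where "s = inv\<^bsub>Hol N\<^esub> (r y) \<otimes>\<^bsub>Hol N\<^esub> g"
    have sG: "s \<in> G" unfolding s_def using r[OF y] g by (intro G.m_closed G.m_inv_closed) auto
    have "hol_act N s \<one>\<^bsub>N\<^esub> = hol_act N (inv\<^bsub>Hol N\<^esub> (r y)) (hol_act N g \<one>\<^bsub>N\<^esub>)"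
      unfolding s_def by (rule act_mult[OF Hol.inv_closed[OF ryc] gc N.one_closed])
    also have "\<dots> = hol_act N (inv\<^bsub>Hol N\<^esub> (r y)) y" by (simp only: y_def)
    also have "\<dots> = hol_act N (inv\<^bsub>Hol N\<^esub> (r y)) (hol_act N (r y) \<one>\<^bsub>N\<^esub>)" using r[OF y] by simp
    also have "\<dots> = \<one>\<^bsub>N\<^esub>"
      using act_mult[OF Hol.inv_closed[OF ryc] ryc N.one_closed, symmetric] ryc by (simp add: act_one)
    finally have "s \<in> S" using sG S by blast
    moreover have "r y \<otimes>\<^bsub>Hol N\<^esub> s = g" unfolding s_def using ryc gc by (simp add: Hol.hq_c2)
    ultimately show "\<exists>ys\<in>carrier N \<times> S. g = (\<lambda>(y, s). r y \<otimes>\<^bsub>Hol N\<^esub> s) ys" using y by force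
  qed
  have "card G = card (carrier N \<times> S)" using bij_betw_same_card[OF bij] by simp
  also have "\<dots> = p ^ e * card S" by (simp add: card_cartesian_product card_N)
  finally show ?thesis by (simp add: S_def)
qed

end

context cyc begin

interpretation N: comm_group N by (rule cg)
interpretation Hol: group "Hol N" by (rule hol_group)

lemma core_char:
  assumes G: "subgroup G (Hol N)" and H: "subgroup H ((Hol N)\<lparr>carrier := G\<rparr>)"
  shows "core ((Hol N)\<lparr>carrier := G\<rparr>) H = {x \<in> carrier (Hol N). \<forall>g\<in>G. inv\<^bsub>Hol N\<^esub> g \<otimes>\<^bsub>Hol N\<^esub> x \<otimes>\<^bsub>Hol N\<^esub> g \<in> H}"
proof -
  interpret G: subgroup G "Hol N" by (rule G)
  have HG: "H \<subseteq> G" using subgroup.subset[OF H] by simp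
  have Hc: "H \<subseteq> carrier (Hol N)" using HG G.subset by blast
  have eq: "g <#\<^bsub>(Hol N)\<lparr>carrier := G\<rparr>\<^esub> H #>\<^bsub>(Hol N)\<lparr>carrier := G\<rparr>\<^esub> inv\<^bsub>(Hol N)\<lparr>carrier := G\<rparr>\<^esub> g
      = {x \<in> carrier (Hol N). inv\<^bsub>Hol N\<^esub> g \<otimes>\<^bsub>Hol N\<^esub> x \<otimes>\<^bsub>Hol N\<^esub> g \<in> H}" if g: "g \<in> G" for g
  proof -
    have gc: "g \<in> carrier (Hol N)" using g G.subset by blast
    have "inv\<^bsub>(Hol N)\<lparr>carrier := G\<rparr>\<^esub> g = inv\<^bsub>Hol N\<^esub> g" by (rule Hol.m_inv_consistent[OF G g])
    then show ?thesis by (simp add: lcos_upd rcos_upd Hol.hq_conj_set[OF gc Hc])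
  qed
  have "G \<noteq> {}" using G.one_closed by blast
  then show ?thesis unfolding core_def using eq by auto
qed

end

context cyc begin

interpretation N: comm_group N by (rule cg)
interpretation Hol: group "Hol N" by (rule hol_group)

lemma core_normal:
  assumes G: "subgroup G (Hol N)" and H: "subgroup H ((Hol N)\<lparr>carrier := G\<rparr>)"
  shows "core ((Hol N)\<lparr>carrier := G\<rparr>) H \<lhd> (Hol N)\<lparr>carrier := G\<rparr>"
proof -
  interpret G: subgroup G "Hol N" by (rule G)
  have HH: "subgroup H (Hol N)" by (rule Hol.incl_subgroup[OF G H])
  interpret H: subgroup H "Hol N" by (rule HH)
  have GG: "group ((Hol N)\<lparr>carrier := G\<rparr>)" by (rule subgroup.subgroup_is_group[OF G hol_group])
  define C where "C = core ((Hol N)\<lparr>carrier := G\<rparr>) H"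
  have C: "C = {x \<in> carrier (Hol N). \<forall>g\<in>G. inv\<^bsub>Hol N\<^esub> g \<otimes>\<^bsub>Hol N\<^esub> x \<otimes>\<^bsub>Hol N\<^esub> g \<in> H}"
    unfolding C_def by (rule core_char[OF G H])
  have Gc: "\<And>g. g \<in> G \<Longrightarrow> g \<in> carrier (Hol N)" using G.subset by blast
  have CG: "C \<subseteq> G"
  proof
    fix x assume "x \<in> C"
    then have 1: "inv\<^bsub>Hol N\<^esub> \<one>\<^bsub>Hol N\<^esub> \<otimes>\<^bsub>Hol N\<^esub> x \<otimes>\<^bsub>Hol N\<^esub> \<one>\<^bsub>Hol N\<^esub> \<in> H" and 2: "x \<in> carrier (Hol N)"
      using C G.one_closed by blast+
    from 1 2 have "x \<in> H" by simp
    then show "x \<in> G" using subgroup.subset[OF H] by auto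
  qed
  have CHol: "subgroup C (Hol N)"
  proof (rule Hol.subgroupI)
    show "C \<subseteq> carrier (Hol N)" using C by blast
    have "\<one>\<^bsub>Hol N\<^esub> \<in> C" using C Gc by (auto simp: H.one_closed)
    then show "C \<noteq> {}" by blast
  next
    fix x assume x: "x \<in> C"
    have xc: "x \<in> carrier (Hol N)" using x C by blast
    have "inv\<^bsub>Hol N\<^esub> g \<otimes>\<^bsub>Hol N\<^esub> inv\<^bsub>Hol N\<^esub> x \<otimes>\<^bsub>Hol N\<^esub> g \<in> H" if g: "g \<in> G" for g
    proof -
      have "inv\<^bsub>Hol N\<^esub> g \<otimes>\<^bsub>Hol N\<^esub> x \<otimes>\<^bsub>Hol N\<^esub> g \<in> H" using x g C by blast
      then have "inv\<^bsub>Hol N\<^esub> (inv\<^bsub>Hol N\<^esub> g \<otimes>\<^bsub>Hol N\<^esub> x \<otimes>\<^bsub>Hol N\<^esub> g) \<in> H" by (rule H.m_inv_closed)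
      then show ?thesis using Hol.hq_conj6[OF Gc[OF g] xc] by simp
    qed
    then show "inv\<^bsub>Hol N\<^esub> x \<in> C" using C xc by auto
  next
    fix x y assume x: "x \<in> C" and y: "y \<in> C"
    have xc: "x \<in> carrier (Hol N)" and yc: "y \<in> carrier (Hol N)" using x y C by auto
    have "inv\<^bsub>Hol N\<^esub> g \<otimes>\<^bsub>Hol N\<^esub> (x \<otimes>\<^bsub>Hol N\<^esub> y) \<otimes>\<^bsub>Hol N\<^esub> g \<in> H" if g: "g \<in> G" for g
    proof -
      have "inv\<^bsub>Hol N\<^esub> g \<otimes>\<^bsub>Hol N\<^esub> x \<otimes>\<^bsub>Hol N\<^esub> g \<in> H" "inv\<^bsub>Hol N\<^esub> g \<otimes>\<^bsub>Hol N\<^esub> y \<otimes>\<^bsub>Hol N\<^esub> g \<in> H"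
        using x y g C by auto
      then show ?thesis using Hol.hq_conj4[OF Gc[OF g] xc yc] by (simp add: H.m_closed)
    qed
    then show "x \<otimes>\<^bsub>Hol N\<^esub> y \<in> C" using C xc yc by auto
  qed
  have CGG: "subgroup C ((Hol N)\<lparr>carrier := G\<rparr>)" by (rule Hol.subgroup_incl[OF CHol G CG])
  have "C \<lhd> (Hol N)\<lparr>carrier := G\<rparr>"
  proof (subst group.normal_inv_iff[OF GG], intro conjI ballI)
    show "subgroup C ((Hol N)\<lparr>carrier := G\<rparr>)" by (rule CGG)
  next
    fix x h assume x: "x \<in> carrier ((Hol N)\<lparr>carrier := G\<rparr>)" and h: "h \<in> C"
    have xG: "x \<in> G" using x by simp
    have xc: "x \<in> carrier (Hol N)" using Gc[OF xG] .
    have hc: "h \<in> carrier (Hol N)" using h C by blast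
    have iv: "inv\<^bsub>(Hol N)\<lparr>carrier := G\<rparr>\<^esub> x = inv\<^bsub>Hol N\<^esub> x" by (rule Hol.m_inv_consistent[OF G xG])
    have "inv\<^bsub>Hol N\<^esub> g \<otimes>\<^bsub>Hol N\<^esub> (x \<otimes>\<^bsub>Hol N\<^esub> h \<otimes>\<^bsub>Hol N\<^esub> inv\<^bsub>Hol N\<^esub> x) \<otimes>\<^bsub>Hol N\<^esub> g \<in> H" if g: "g \<in> G" for g
    proof -
      have ig: "inv\<^bsub>Hol N\<^esub> x \<otimes>\<^bsub>Hol N\<^esub> g \<in> G" using xG g by (intro G.m_closed G.m_inv_closed)
      have "inv\<^bsub>Hol N\<^esub> (inv\<^bsub>Hol N\<^esub> x \<otimes>\<^bsub>Hol N\<^esub> g) \<otimes>\<^bsub>Hol N\<^esub> h \<otimes>\<^bsub>Hol N\<^esub> (inv\<^bsub>Hol N\<^esub> x \<otimes>\<^bsub>Hol N\<^esub> g) \<in> H"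
        using h ig C by blast
      then show ?thesis using Hol.hq_conj5[OF Gc[OF g] xc hc] by simp
    qed
    moreover have "x \<otimes>\<^bsub>Hol N\<^esub> h \<otimes>\<^bsub>Hol N\<^esub> inv\<^bsub>Hol N\<^esub> x \<in> carrier (Hol N)" using xc hc by simp
    ultimately show "x \<otimes>\<^bsub>(Hol N)\<lparr>carrier := G\<rparr>\<^esub> h \<otimes>\<^bsub>(Hol N)\<lparr>carrier := G\<rparr>\<^esub> inv\<^bsub>(Hol N)\<lparr>carrier := G\<rparr>\<^esub> x \<in> C"
      using C iv by simp
  qed
  then show ?thesis by (simp add: C_def)
qed

end

context cyc begin

interpretation N: comm_group N by (rule cg)
interpretation Hol: group "Hol N" by (rule hol_group)

lemma stab_set: assumes G: "subgroup G (Hol N)"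
  shows "hol_stab N G = {s \<in> G. hol_act N s \<one>\<^bsub>N\<^esub> = \<one>\<^bsub>N\<^esub>}"
  unfolding hol_stab_def using stab_iff subgroup.subset[OF G] by blast

lemma act_conj_one:
  assumes g0: "g0 \<in> carrier (Hol N)" and h: "h \<in> carrier (Hol N)" and f: "hol_act N h (hol_act N g0 \<one>\<^bsub>N\<^esub>) = hol_act N g0 \<one>\<^bsub>N\<^esub>"
  shows "hol_act N (inv\<^bsub>Hol N\<^esub> g0 \<otimes>\<^bsub>Hol N\<^esub> h \<otimes>\<^bsub>Hol N\<^esub> g0) \<one>\<^bsub>N\<^esub> = \<one>\<^bsub>N\<^esub>"
proof -
  have ig: "inv\<^bsub>Hol N\<^esub> g0 \<in> carrier (Hol N)" using g0 by simp
  have "hol_act N (inv\<^bsub>Hol N\<^esub> g0 \<otimes>\<^bsub>Hol N\<^esub> h \<otimes>\<^bsub>Hol N\<^esub> g0) \<one>\<^bsub>N\<^esub>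
      = hol_act N (inv\<^bsub>Hol N\<^esub> g0) (hol_act N h (hol_act N g0 \<one>\<^bsub>N\<^esub>))"
    using act_mult[OF Hol.m_closed[OF ig h] g0 N.one_closed] act_mult[OF ig h act_in[OF g0 N.one_closed]]
    by simp
  also have "\<dots> = hol_act N (inv\<^bsub>Hol N\<^esub> g0) (hol_act N g0 \<one>\<^bsub>N\<^esub>)" using f by simp
  also have "\<dots> = hol_act N (inv\<^bsub>Hol N\<^esub> g0 \<otimes>\<^bsub>Hol N\<^esub> g0) \<one>\<^bsub>N\<^esub>"
    using act_mult[OF ig g0 N.one_closed] by simp
  also have "\<dots> = \<one>\<^bsub>N\<^esub>" using g0 by (simp add: act_one)
  finally show ?thesis .
qed

lemma fwd:
  assumes G: "subgroup G (Hol N)" and trG: "hol_transitive N G"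
    and H: "subgroup H ((Hol N)\<lparr>carrier := G\<rparr>)"
    and idx: "card (rcosets\<^bsub>(Hol N)\<lparr>carrier := G\<rparr>\<^esub> H) = p ^ e"
    and T: "subgroup T (Hol N)" and trT: "hol_transitive N T"
    and phi: "\<phi> \<in> iso ((Hol N)\<lparr>carrier := G\<rparr> Mod core ((Hol N)\<lparr>carrier := G\<rparr>) H) ((Hol N)\<lparr>carrier := T\<rparr>)"
  shows "\<exists>g\<in>G. H = g <#\<^bsub>Hol N\<^esub> hol_stab N G #>\<^bsub>Hol N\<^esub> inv\<^bsub>Hol N\<^esub> g"
proof -
  interpret G: subgroup G "Hol N" by (rule G)
  have HH: "subgroup H (Hol N)" by (rule Hol.incl_subgroup[OF G H])
  interpret H: subgroup H "Hol N" by (rule HH)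
  have Gc: "\<And>g. g \<in> G \<Longrightarrow> g \<in> carrier (Hol N)" using G.subset by blast
  have GG: "group ((Hol N)\<lparr>carrier := G\<rparr>)" by (rule subgroup.subgroup_is_group[OF G hol_group])
  define C where "C = core ((Hol N)\<lparr>carrier := G\<rparr>) H"
  have Cn: "C \<lhd> (Hol N)\<lparr>carrier := G\<rparr>" unfolding C_def by (rule core_normal[OF G H])
  have Csub: "subgroup C ((Hol N)\<lparr>carrier := G\<rparr>)" using Cn by (rule normal_imp_subgroup)
  have CG: "C \<subseteq> G" using subgroup.subset[OF Csub] by simp
  have Cchar: "C = {x \<in> carrier (Hol N). \<forall>g\<in>G. inv\<^bsub>Hol N\<^esub> g \<otimes>\<^bsub>Hol N\<^esub> x \<otimes>\<^bsub>Hol N\<^esub> g \<in> H}"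
    unfolding C_def by (rule core_char[OF G H])
  have FG: "group ((Hol N)\<lparr>carrier := G\<rparr> Mod C)" by (rule normal.factorgroup_is_group[OF Cn])
  have TG: "group ((Hol N)\<lparr>carrier := T\<rparr>)" by (rule subgroup.subgroup_is_group[OF T hol_group])
  have hom: "\<phi> \<in> hom ((Hol N)\<lparr>carrier := G\<rparr> Mod C) ((Hol N)\<lparr>carrier := T\<rparr>)"
    and bij: "bij_betw \<phi> (carrier ((Hol N)\<lparr>carrier := G\<rparr> Mod C)) T"
    using phi by (auto simp: iso_def C_def)
  obtain t where t: "t \<in> T" "t [^]\<^bsub>Hol N\<^esub> m \<noteq> \<one>\<^bsub>Hol N\<^esub>" using trans_elem[OF T trT] by blast
  have "t \<in> \<phi> ` carrier ((Hol N)\<lparr>carrier := G\<rparr> Mod C)" using bij t(1) by (simp add: bij_betw_def)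
  then obtain Xc where Xc: "Xc \<in> carrier ((Hol N)\<lparr>carrier := G\<rparr> Mod C)" "\<phi> Xc = t" by blast
  obtain g where g: "g \<in> G" "Xc = C #>\<^bsub>(Hol N)\<lparr>carrier := G\<rparr>\<^esub> g"
    using Xc(1) by (auto simp: FactGroup_def RCOSETS_def)
  have gc: "g \<in> carrier (Hol N)" using Gc[OF g(1)] .
  have Xpow: "Xc [^]\<^bsub>(Hol N)\<lparr>carrier := G\<rparr> Mod C\<^esub> (k::nat) = C #>\<^bsub>(Hol N)\<lparr>carrier := G\<rparr>\<^esub> (g [^]\<^bsub>Hol N\<^esub> k)" for k
  proof (induction k)
    case 0
    have "C #>\<^bsub>(Hol N)\<lparr>carrier := G\<rparr>\<^esub> \<one>\<^bsub>(Hol N)\<lparr>carrier := G\<rparr>\<^esub> = C"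
      by (rule group.coset_mult_one[OF GG]) (use CG in simp)
    then show ?case by (simp add: FactGroup_def)
  next
    case (Suc k)
    have gk: "g [^]\<^bsub>Hol N\<^esub> k \<in> carrier ((Hol N)\<lparr>carrier := G\<rparr>)" using sub_pow[OF G g(1)] by simp
    have g1: "g \<in> carrier ((Hol N)\<lparr>carrier := G\<rparr>)" using g(1) by simp
    have "Xc [^]\<^bsub>(Hol N)\<lparr>carrier := G\<rparr> Mod C\<^esub> Suc k
        = (C #>\<^bsub>(Hol N)\<lparr>carrier := G\<rparr>\<^esub> (g [^]\<^bsub>Hol N\<^esub> k)) <#>\<^bsub>(Hol N)\<lparr>carrier := G\<rparr>\<^esub> (C #>\<^bsub>(Hol N)\<lparr>carrier := G\<rparr>\<^esub> g)"
      using Suc g(2) by (simp add: FactGroup_def)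
    also have "\<dots> = C #>\<^bsub>(Hol N)\<lparr>carrier := G\<rparr>\<^esub> (g [^]\<^bsub>Hol N\<^esub> k \<otimes>\<^bsub>(Hol N)\<lparr>carrier := G\<rparr>\<^esub> g)"
      by (rule normal.rcos_sum[OF Cn gk g1])
    finally show ?case by simp
  qed
  have hp: "\<phi> (Xc [^]\<^bsub>(Hol N)\<lparr>carrier := G\<rparr> Mod C\<^esub> m) = t [^]\<^bsub>(Hol N)\<lparr>carrier := T\<rparr>\<^esub> m"
    using hom_nat_pow[OF hom Xc(1) FG TG] Xc(2) by simp
  have gmC: "g [^]\<^bsub>Hol N\<^esub> m \<notin> C"
  proof
    assume gin: "g [^]\<^bsub>Hol N\<^esub> m \<in> C"
    have "Xc [^]\<^bsub>(Hol N)\<lparr>carrier := G\<rparr> Mod C\<^esub> m = C"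
      using Xpow[of m] subgroup.rcos_const[OF Csub GG gin] by simp
    then have "Xc [^]\<^bsub>(Hol N)\<lparr>carrier := G\<rparr> Mod C\<^esub> m = \<one>\<^bsub>(Hol N)\<lparr>carrier := G\<rparr> Mod C\<^esub>"
      by (simp add: FactGroup_def)
    then have "\<phi> (Xc [^]\<^bsub>(Hol N)\<lparr>carrier := G\<rparr> Mod C\<^esub> m) = \<one>\<^bsub>(Hol N)\<lparr>carrier := T\<rparr>\<^esub>"
      using hom_one[OF hom FG TG] by simp
    then have "t [^]\<^bsub>Hol N\<^esub> m = \<one>\<^bsub>Hol N\<^esub>" using hp by (simp add: pow_upd)
    then show False using t(2) by simp
  qed
  obtain c where c: "g [^]\<^bsub>Hol N\<^esub> m = el (int p ^ (e - 1) * c) 1" using powm_trans[OF gc] by blast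
  have "g [^]\<^bsub>Hol N\<^esub> m \<in> carrier (Hol N)" using gc by simp
  then obtain g1 where g1: "g1 \<in> G" "inv\<^bsub>Hol N\<^esub> g1 \<otimes>\<^bsub>Hol N\<^esub> g [^]\<^bsub>Hol N\<^esub> m \<otimes>\<^bsub>Hol N\<^esub> g1 \<notin> H"
    using gmC Cchar by blast
  obtain v where v: "\<not> int p dvd v" "\<forall>z. inv\<^bsub>Hol N\<^esub> g1 \<otimes>\<^bsub>Hol N\<^esub> el z 1 \<otimes>\<^bsub>Hol N\<^esub> g1 = el (v * z) 1"
    using conj_trans[OF Gc[OF g1(1)]] by blast
  have notH: "el (v * (int p ^ (e - 1) * c)) 1 \<notin> H" using g1(2) v(2) c by simp
  have tr: "\<forall>h\<in>H. \<forall>c'. h = el c' 1 \<longrightarrow> [c' = 0] (mod n)"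
  proof (intro ballI allI impI, rule ccontr)
    fix h c' assume hH: "h \<in> H" and hc: "h = el c' 1" and nc: "\<not> [c' = 0] (mod n)"
    have "\<not> n dvd c'" using nc by (simp add: cong_0_iff)
    then obtain k where k: "[int k * c' = int p ^ (e - 1) * (v * c)] (mod n)" using trans_gen by blast
    have "h [^]\<^bsub>Hol N\<^esub> k = el (c' * gs k 1) (1 ^ k)" by (simp only: hc el_pow)
    also have "\<dots> = el (v * (int p ^ (e - 1) * c)) 1"
    proof -
      have e1: "c' * gs k 1 = int k * c'" by (simp add: gs_one)
      have e2: "int p ^ (e - 1) * (v * c) = v * (int p ^ (e - 1) * c)" by simp
      have "[c' * gs k 1 = v * (int p ^ (e - 1) * c)] (mod n)" using k unfolding e1 e2 .
      then show ?thesis by (simp add: el_eq)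
    qed
    finally have "el (v * (int p ^ (e - 1) * c)) 1 \<in> H" using sub_pow[OF HH hH, of k] by metis
    then show False using notH by blast
  qed
  obtain x where x: "x \<in> carrier N" "\<forall>h\<in>H. hol_act N h x = x" using fix_common[OF HH tr] by blast
  obtain g0 where g0: "g0 \<in> G" "hol_act N g0 \<one>\<^bsub>N\<^esub> = x"
    using trG x(1) N.one_closed unfolding hol_transitive_def by blast
  have g0c: "g0 \<in> carrier (Hol N)" using Gc[OF g0(1)] .
  define S where "S = hol_stab N G"
  have S: "S = {s \<in> G. hol_act N s \<one>\<^bsub>N\<^esub> = \<one>\<^bsub>N\<^esub>}" unfolding S_def by (rule stab_set[OF G])
  have Sc: "S \<subseteq> carrier (Hol N)" using S G.subset by blast
  have conj: "g0 <#\<^bsub>Hol N\<^esub> S #>\<^bsub>Hol N\<^esub> inv\<^bsub>Hol N\<^esub> g0 = {y \<in> carrier (Hol N). inv\<^bsub>Hol N\<^esub> g0 \<otimes>\<^bsub>Hol N\<^esub> y \<otimes>\<^bsub>Hol N\<^esub> g0 \<in> S}"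
    by (rule Hol.hq_conj_set[OF g0c Sc])
  have sub: "H \<subseteq> g0 <#\<^bsub>Hol N\<^esub> S #>\<^bsub>Hol N\<^esub> inv\<^bsub>Hol N\<^esub> g0"
  proof
    fix h assume hH: "h \<in> H"
    have hc: "h \<in> carrier (Hol N)" using hH H.subset by blast
    have hG: "h \<in> G" using hH subgroup.subset[OF H] by auto
    have sG: "inv\<^bsub>Hol N\<^esub> g0 \<otimes>\<^bsub>Hol N\<^esub> h \<otimes>\<^bsub>Hol N\<^esub> g0 \<in> G" using g0(1) hG by (intro G.m_closed G.m_inv_closed)
    have "hol_act N (inv\<^bsub>Hol N\<^esub> g0 \<otimes>\<^bsub>Hol N\<^esub> h \<otimes>\<^bsub>Hol N\<^esub> g0) \<one>\<^bsub>N\<^esub> = \<one>\<^bsub>N\<^esub>"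
      by (rule act_conj_one[OF g0c hc]) (use x(2) hH g0(2) in simp)
    then show "h \<in> g0 <#\<^bsub>Hol N\<^esub> S #>\<^bsub>Hol N\<^esub> inv\<^bsub>Hol N\<^esub> g0" using conj S sG hc by simp
  qed
  have cardH: "card H = card S"
  proof -
    have "card (rcosets\<^bsub>(Hol N)\<lparr>carrier := G\<rparr>\<^esub> H) * card H = order ((Hol N)\<lparr>carrier := G\<rparr>)"
      by (rule group.lagrange[OF GG H])
    then have "p ^ e * card H = card G" using idx by (simp add: order_def)
    also have "\<dots> = p ^ e * card S" unfolding S_def by (rule card_stab[OF G trG])
    finally show ?thesis using p_gt1 by simp
  qed
  have cardc: "card (g0 <#\<^bsub>Hol N\<^esub> S #>\<^bsub>Hol N\<^esub> inv\<^bsub>Hol N\<^esub> g0) = card S"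
  proof -
    have "inj_on (\<lambda>s. g0 \<otimes>\<^bsub>Hol N\<^esub> s \<otimes>\<^bsub>Hol N\<^esub> inv\<^bsub>Hol N\<^esub> g0) S"
    proof
      fix s1 s2 assume s1: "s1 \<in> S" and s2: "s2 \<in> S"
        and eq: "g0 \<otimes>\<^bsub>Hol N\<^esub> s1 \<otimes>\<^bsub>Hol N\<^esub> inv\<^bsub>Hol N\<^esub> g0 = g0 \<otimes>\<^bsub>Hol N\<^esub> s2 \<otimes>\<^bsub>Hol N\<^esub> inv\<^bsub>Hol N\<^esub> g0"
      have s1c: "s1 \<in> carrier (Hol N)" and s2c: "s2 \<in> carrier (Hol N)" using s1 s2 Sc by auto
      have "s1 = inv\<^bsub>Hol N\<^esub> g0 \<otimes>\<^bsub>Hol N\<^esub> (g0 \<otimes>\<^bsub>Hol N\<^esub> s1 \<otimes>\<^bsub>Hol N\<^esub> inv\<^bsub>Hol N\<^esub> g0) \<otimes>\<^bsub>Hol N\<^esub> g0"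
        by (rule Hol.hq_conj1[OF g0c s1c, symmetric])
      also have "\<dots> = s2" unfolding eq by (rule Hol.hq_conj1[OF g0c s2c])
      finally show "s1 = s2" .
    qed
    then show ?thesis by (simp add: Hol.hq_conj_img card_image)
  qed
  have fin: "finite (g0 <#\<^bsub>Hol N\<^esub> S #>\<^bsub>Hol N\<^esub> inv\<^bsub>Hol N\<^esub> g0)"
    using conj finite_Hol by simp
  have "H = g0 <#\<^bsub>Hol N\<^esub> S #>\<^bsub>Hol N\<^esub> inv\<^bsub>Hol N\<^esub> g0"
    by (rule card_subset_eq[OF fin sub]) (simp add: cardH cardc)
  then show ?thesis using g0(1) S_def by blast
qed

end

context cyc begin

interpretation N: comm_group N by (rule cg)
interpretation Hol: group "Hol N" by (rule hol_group)

lemma act_conj_back: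
  assumes g: "g \<in> carrier (Hol N)" and x: "x \<in> carrier (Hol N)"
    and f: "hol_act N (inv\<^bsub>Hol N\<^esub> g \<otimes>\<^bsub>Hol N\<^esub> x \<otimes>\<^bsub>Hol N\<^esub> g) \<one>\<^bsub>N\<^esub> = \<one>\<^bsub>N\<^esub>"
  shows "hol_act N x (hol_act N g \<one>\<^bsub>N\<^esub>) = hol_act N g \<one>\<^bsub>N\<^esub>"
proof -
  have ig: "inv\<^bsub>Hol N\<^esub> g \<in> carrier (Hol N)" using g by simp
  have z: "hol_act N x (hol_act N g \<one>\<^bsub>N\<^esub>) \<in> carrier N" by (intro act_in x g N.one_closed)
  have "hol_act N (inv\<^bsub>Hol N\<^esub> g) (hol_act N x (hol_act N g \<one>\<^bsub>N\<^esub>)) = \<one>\<^bsub>N\<^esub>"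
    using f act_mult[OF Hol.m_closed[OF ig x] g N.one_closed] act_mult[OF ig x act_in[OF g N.one_closed]]
    by simp
  then have "hol_act N g (hol_act N (inv\<^bsub>Hol N\<^esub> g) (hol_act N x (hol_act N g \<one>\<^bsub>N\<^esub>))) = hol_act N g \<one>\<^bsub>N\<^esub>"
    by simp
  moreover have "hol_act N g (hol_act N (inv\<^bsub>Hol N\<^esub> g) (hol_act N x (hol_act N g \<one>\<^bsub>N\<^esub>)))
      = hol_act N x (hol_act N g \<one>\<^bsub>N\<^esub>)"
    using act_mult[OF g ig z, symmetric] g z by (simp add: act_one)
  ultimately show ?thesis by simp
qed

lemma bwd:
  assumes G: "subgroup G (Hol N)" and trG: "hol_transitive N G"
    and H: "subgroup H ((Hol N)\<lparr>carrier := G\<rparr>)"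
    and g0: "g0 \<in> G" and Heq: "H = g0 <#\<^bsub>Hol N\<^esub> hol_stab N G #>\<^bsub>Hol N\<^esub> inv\<^bsub>Hol N\<^esub> g0"
  shows "\<exists>T \<phi>. subgroup T (Hol N) \<and> hol_transitive N T \<and>
            \<phi> \<in> iso ((Hol N)\<lparr>carrier := G\<rparr> Mod core ((Hol N)\<lparr>carrier := G\<rparr>) H)
                    ((Hol N)\<lparr>carrier := T\<rparr>) \<and>
            \<phi> ` ((\<lambda>h. core ((Hol N)\<lparr>carrier := G\<rparr>) H #>\<^bsub>Hol N\<^esub> h) ` H) = hol_stab N T"
proof -
  interpret G: subgroup G "Hol N" by (rule G)
  have HH: "subgroup H (Hol N)" by (rule Hol.incl_subgroup[OF G H])
  interpret H: subgroup H "Hol N" by (rule HH)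
  have Gc: "\<And>g. g \<in> G \<Longrightarrow> g \<in> carrier (Hol N)" using G.subset by blast
  have g0c: "g0 \<in> carrier (Hol N)" using Gc[OF g0] .
  define S where "S = hol_stab N G"
  have S: "S = {s \<in> G. hol_act N s \<one>\<^bsub>N\<^esub> = \<one>\<^bsub>N\<^esub>}" unfolding S_def by (rule stab_set[OF G])
  have Sc: "S \<subseteq> carrier (Hol N)" using S G.subset by blast
  have Hset: "H = {y \<in> carrier (Hol N). inv\<^bsub>Hol N\<^esub> g0 \<otimes>\<^bsub>Hol N\<^esub> y \<otimes>\<^bsub>Hol N\<^esub> g0 \<in> S}"
    unfolding Heq S_def[symmetric] by (rule Hol.hq_conj_set[OF g0c Sc])
  define C where "C = core ((Hol N)\<lparr>carrier := G\<rparr>) H"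
  have Cchar: "C = {x \<in> carrier (Hol N). \<forall>g\<in>G. inv\<^bsub>Hol N\<^esub> g \<otimes>\<^bsub>Hol N\<^esub> x \<otimes>\<^bsub>Hol N\<^esub> g \<in> H}"
    unfolding C_def by (rule core_char[OF G H])
  have C1: "C = {\<one>\<^bsub>Hol N\<^esub>}"
  proof
    show "{\<one>\<^bsub>Hol N\<^esub>} \<subseteq> C" using Cchar Gc by auto
  next
    show "C \<subseteq> {\<one>\<^bsub>Hol N\<^esub>}"
    proof
      fix x assume xC: "x \<in> C"
      have xc: "x \<in> carrier (Hol N)" using xC Cchar by blast
      have "\<forall>y\<in>carrier N. hol_act N x y = y"
      proof
        fix y assume y: "y \<in> carrier N"
        obtain g' where g': "g' \<in> G" "hol_act N g' \<one>\<^bsub>N\<^esub> = y"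
          using trG y N.one_closed unfolding hol_transitive_def by blast
        have g'c: "g' \<in> carrier (Hol N)" using Gc[OF g'(1)] .
        have gG: "g' \<otimes>\<^bsub>Hol N\<^esub> inv\<^bsub>Hol N\<^esub> g0 \<in> G" using g'(1) g0 by (intro G.m_closed G.m_inv_closed)
        have "inv\<^bsub>Hol N\<^esub> (g' \<otimes>\<^bsub>Hol N\<^esub> inv\<^bsub>Hol N\<^esub> g0) \<otimes>\<^bsub>Hol N\<^esub> x \<otimes>\<^bsub>Hol N\<^esub> (g' \<otimes>\<^bsub>Hol N\<^esub> inv\<^bsub>Hol N\<^esub> g0) \<in> H"
          using xC Cchar gG by blast
        then have "inv\<^bsub>Hol N\<^esub> g0 \<otimes>\<^bsub>Hol N\<^esub> (inv\<^bsub>Hol N\<^esub> (g' \<otimes>\<^bsub>Hol N\<^esub> inv\<^bsub>Hol N\<^esub> g0) \<otimes>\<^bsub>Hol N\<^esub> x \<otimes>\<^bsub>Hol N\<^esub> (g' \<otimes>\<^bsub>Hol N\<^esub> inv\<^bsub>Hol N\<^esub> g0)) \<otimes>\<^bsub>Hol N\<^esub> g0 \<in> S"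
          using Hset by blast
        then have "inv\<^bsub>Hol N\<^esub> g' \<otimes>\<^bsub>Hol N\<^esub> x \<otimes>\<^bsub>Hol N\<^esub> g' \<in> S" using Hol.hq_conj3[OF g'c g0c xc] by simp
        then have "hol_act N (inv\<^bsub>Hol N\<^esub> g' \<otimes>\<^bsub>Hol N\<^esub> x \<otimes>\<^bsub>Hol N\<^esub> g') \<one>\<^bsub>N\<^esub> = \<one>\<^bsub>N\<^esub>" using S by blast
        then have "hol_act N x (hol_act N g' \<one>\<^bsub>N\<^esub>) = hol_act N g' \<one>\<^bsub>N\<^esub>" by (rule act_conj_back[OF g'c xc])
        then show "hol_act N x y = y" using g'(2) by simp
      qed
      then have "x = \<one>\<^bsub>Hol N\<^esub>" by (rule fix_all[OF xc])
      then show "x \<in> {\<one>\<^bsub>Hol N\<^esub>}" by simp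
    qed
  qed
  define \<phi> where "\<phi> Z = inv\<^bsub>Hol N\<^esub> g0 \<otimes>\<^bsub>Hol N\<^esub> the_elem Z \<otimes>\<^bsub>Hol N\<^esub> g0" for Z
  have sing: "{\<one>\<^bsub>Hol N\<^esub>} #>\<^bsub>Hol N\<^esub> x = {x}" if xc: "x \<in> carrier (Hol N)" for x
    unfolding r_coset_def using Hol.l_one[OF xc] by simp
  have rc: "C #>\<^bsub>(Hol N)\<lparr>carrier := G\<rparr>\<^esub> x = {x}" if xG: "x \<in> G" for x
  proof -
    have "C #>\<^bsub>(Hol N)\<lparr>carrier := G\<rparr>\<^esub> x = {\<one>\<^bsub>Hol N\<^esub>} #>\<^bsub>Hol N\<^esub> x" by (simp only: C1 rcos_upd)
    also have "\<dots> = {x}" by (rule sing[OF Gc[OF xG]])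
    finally show ?thesis .
  qed
  have carr: "carrier ((Hol N)\<lparr>carrier := G\<rparr> Mod C) = (\<lambda>x. {x}) ` G"
  proof -
    have "carrier ((Hol N)\<lparr>carrier := G\<rparr> Mod C) = (\<Union>x\<in>G. {C #>\<^bsub>(Hol N)\<lparr>carrier := G\<rparr>\<^esub> x})"
      by (simp add: FactGroup_def RCOSETS_def)
    also have "\<dots> = (\<Union>x\<in>G. {{x}})" using rc by simp
    also have "\<dots> = (\<lambda>x. {x}) ` G" by blast
    finally show ?thesis .
  qed
  have phis: "\<phi> {x} = inv\<^bsub>Hol N\<^esub> g0 \<otimes>\<^bsub>Hol N\<^esub> x \<otimes>\<^bsub>Hol N\<^esub> g0" for x by (simp add: \<phi>_def)
  have iso: "\<phi> \<in> iso ((Hol N)\<lparr>carrier := G\<rparr> Mod C) ((Hol N)\<lparr>carrier := G\<rparr>)"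
  proof -
    have hom: "\<phi> \<in> hom ((Hol N)\<lparr>carrier := G\<rparr> Mod C) ((Hol N)\<lparr>carrier := G\<rparr>)"
    proof (rule homI)
      fix Z assume "Z \<in> carrier ((Hol N)\<lparr>carrier := G\<rparr> Mod C)"
      then have "Z \<in> (\<lambda>x. {x}) ` G" by (simp only: carr)
      then obtain x where x: "x \<in> G" "Z = {x}" by blast
      have "inv\<^bsub>Hol N\<^esub> g0 \<otimes>\<^bsub>Hol N\<^esub> x \<otimes>\<^bsub>Hol N\<^esub> g0 \<in> G" by (intro G.m_closed G.m_inv_closed x(1) g0)
      then show "\<phi> Z \<in> carrier ((Hol N)\<lparr>carrier := G\<rparr>)" unfolding x(2) phis by simp
    next
      fix Z W assume "Z \<in> carrier ((Hol N)\<lparr>carrier := G\<rparr> Mod C)" "W \<in> carrier ((Hol N)\<lparr>carrier := G\<rparr> Mod C)"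
      then have "Z \<in> (\<lambda>x. {x}) ` G" "W \<in> (\<lambda>x. {x}) ` G" by (simp_all only: carr)
      then obtain x y where x: "x \<in> G" "Z = {x}" and y: "y \<in> G" "W = {y}" by blast
      have "Z \<otimes>\<^bsub>(Hol N)\<lparr>carrier := G\<rparr> Mod C\<^esub> W = {x \<otimes>\<^bsub>Hol N\<^esub> y}"
        using x y by (simp add: FactGroup_def set_mult_def)
      then show "\<phi> (Z \<otimes>\<^bsub>(Hol N)\<lparr>carrier := G\<rparr> Mod C\<^esub> W) = \<phi> Z \<otimes>\<^bsub>(Hol N)\<lparr>carrier := G\<rparr>\<^esub> \<phi> W"
        unfolding x(2) y(2) phis using Hol.hq_conj4[OF g0c Gc[OF x(1)] Gc[OF y(1)]] by (simp add: phis)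
    qed
    have bij: "bij_betw \<phi> (carrier ((Hol N)\<lparr>carrier := G\<rparr> Mod C)) G"
    proof (rule bij_betwI')
      fix Z W assume "Z \<in> carrier ((Hol N)\<lparr>carrier := G\<rparr> Mod C)" "W \<in> carrier ((Hol N)\<lparr>carrier := G\<rparr> Mod C)"
      then have "Z \<in> (\<lambda>x. {x}) ` G" "W \<in> (\<lambda>x. {x}) ` G" by (simp_all only: carr)
      then obtain x y where x: "x \<in> G" "Z = {x}" and y: "y \<in> G" "W = {y}" by blast
      show "(\<phi> Z = \<phi> W) = (Z = W)"
      proof
        assume "\<phi> Z = \<phi> W"
        then have e: "inv\<^bsub>Hol N\<^esub> g0 \<otimes>\<^bsub>Hol N\<^esub> x \<otimes>\<^bsub>Hol N\<^esub> g0 = inv\<^bsub>Hol N\<^esub> g0 \<otimes>\<^bsub>Hol N\<^esub> y \<otimes>\<^bsub>Hol N\<^esub> g0"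
          using x y by (simp add: phis)
        have "x = g0 \<otimes>\<^bsub>Hol N\<^esub> (inv\<^bsub>Hol N\<^esub> g0 \<otimes>\<^bsub>Hol N\<^esub> x \<otimes>\<^bsub>Hol N\<^esub> g0) \<otimes>\<^bsub>Hol N\<^esub> inv\<^bsub>Hol N\<^esub> g0"
          by (rule Hol.hq_conj2[OF g0c Gc[OF x(1)], symmetric])
        also have "\<dots> = y" unfolding e by (rule Hol.hq_conj2[OF g0c Gc[OF y(1)]])
        finally show "Z = W" using x y by simp
      qed simp
    next
      fix Z assume "Z \<in> carrier ((Hol N)\<lparr>carrier := G\<rparr> Mod C)"
      then have "Z \<in> (\<lambda>x. {x}) ` G" by (simp only: carr)
      then obtain x where x: "x \<in> G" "Z = {x}" by blast
      show "\<phi> Z \<in> G" unfolding x(2) phis by (intro G.m_closed G.m_inv_closed x(1) g0)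
    next
      fix y assume y: "y \<in> G"
      have "g0 \<otimes>\<^bsub>Hol N\<^esub> y \<otimes>\<^bsub>Hol N\<^esub> inv\<^bsub>Hol N\<^esub> g0 \<in> G" by (intro G.m_closed G.m_inv_closed y g0)
      moreover have "y = \<phi> {g0 \<otimes>\<^bsub>Hol N\<^esub> y \<otimes>\<^bsub>Hol N\<^esub> inv\<^bsub>Hol N\<^esub> g0}"
        by (simp add: phis Hol.hq_conj1[OF g0c Gc[OF y]])
      ultimately show "\<exists>Z\<in>carrier ((Hol N)\<lparr>carrier := G\<rparr> Mod C). y = \<phi> Z" unfolding carr by blast
    qed
    show ?thesis using hom bij by (simp add: iso_def)
  qed
  have img: "\<phi> ` ((\<lambda>h. C #>\<^bsub>Hol N\<^esub> h) ` H) = S"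
  proof -
    have im1: "(\<lambda>h. C #>\<^bsub>Hol N\<^esub> h) ` H = (\<lambda>h. {h}) ` H"
    proof (rule image_cong[OF refl])
      fix h assume hH: "h \<in> H"
      have hc: "h \<in> carrier (Hol N)" using hH H.subset by blast
      show "C #>\<^bsub>Hol N\<^esub> h = {h}" unfolding C1 by (rule sing[OF hc])
    qed
    have im2: "\<phi> ` ((\<lambda>h. {h}) ` H) = (\<lambda>h. inv\<^bsub>Hol N\<^esub> g0 \<otimes>\<^bsub>Hol N\<^esub> h \<otimes>\<^bsub>Hol N\<^esub> g0) ` H"
      unfolding image_image phis ..
    have sub1: "(\<lambda>h. inv\<^bsub>Hol N\<^esub> g0 \<otimes>\<^bsub>Hol N\<^esub> h \<otimes>\<^bsub>Hol N\<^esub> g0) ` H \<subseteq> S"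
    proof
      fix z assume "z \<in> (\<lambda>h. inv\<^bsub>Hol N\<^esub> g0 \<otimes>\<^bsub>Hol N\<^esub> h \<otimes>\<^bsub>Hol N\<^esub> g0) ` H"
      then obtain h where hH: "h \<in> H" and z: "z = inv\<^bsub>Hol N\<^esub> g0 \<otimes>\<^bsub>Hol N\<^esub> h \<otimes>\<^bsub>Hol N\<^esub> g0" by blast
      have "h \<in> {y \<in> carrier (Hol N). inv\<^bsub>Hol N\<^esub> g0 \<otimes>\<^bsub>Hol N\<^esub> y \<otimes>\<^bsub>Hol N\<^esub> g0 \<in> S}"
        using hH by (simp only: Hset[symmetric])
      then show "z \<in> S" unfolding z by (rule CollectE) (rule conjunct2)
    qed
    have sub2: "S \<subseteq> (\<lambda>h. inv\<^bsub>Hol N\<^esub> g0 \<otimes>\<^bsub>Hol N\<^esub> h \<otimes>\<^bsub>Hol N\<^esub> g0) ` H"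
    proof
      fix s assume s: "s \<in> S"
      have sc: "s \<in> carrier (Hol N)" using s Sc by blast
      have e: "inv\<^bsub>Hol N\<^esub> g0 \<otimes>\<^bsub>Hol N\<^esub> (g0 \<otimes>\<^bsub>Hol N\<^esub> s \<otimes>\<^bsub>Hol N\<^esub> inv\<^bsub>Hol N\<^esub> g0) \<otimes>\<^bsub>Hol N\<^esub> g0 = s"
        by (rule Hol.hq_conj1[OF g0c sc])
      have hc: "g0 \<otimes>\<^bsub>Hol N\<^esub> s \<otimes>\<^bsub>Hol N\<^esub> inv\<^bsub>Hol N\<^esub> g0 \<in> carrier (Hol N)"
        using g0c sc by (intro Hol.m_closed Hol.inv_closed)
      have "g0 \<otimes>\<^bsub>Hol N\<^esub> s \<otimes>\<^bsub>Hol N\<^esub> inv\<^bsub>Hol N\<^esub> g0 \<in> {y \<in> carrier (Hol N). inv\<^bsub>Hol N\<^esub> g0 \<otimes>\<^bsub>Hol N\<^esub> y \<otimes>\<^bsub>Hol N\<^esub> g0 \<in> S}"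
        using hc e s by (intro CollectI conjI) simp_all
      then have hH: "g0 \<otimes>\<^bsub>Hol N\<^esub> s \<otimes>\<^bsub>Hol N\<^esub> inv\<^bsub>Hol N\<^esub> g0 \<in> H" by (simp only: Hset[symmetric])
      show "s \<in> (\<lambda>h. inv\<^bsub>Hol N\<^esub> g0 \<otimes>\<^bsub>Hol N\<^esub> h \<otimes>\<^bsub>Hol N\<^esub> g0) ` H"
        using hH e by (intro image_eqI[where x = "g0 \<otimes>\<^bsub>Hol N\<^esub> s \<otimes>\<^bsub>Hol N\<^esub> inv\<^bsub>Hol N\<^esub> g0"]) simp_all
    qed
    show ?thesis unfolding im1 im2 using sub1 sub2 by (rule subset_antisym)
  qed
  have iso': "\<phi> \<in> iso ((Hol N)\<lparr>carrier := G\<rparr> Mod core ((Hol N)\<lparr>carrier := G\<rparr>) H) ((Hol N)\<lparr>carrier := G\<rparr>)"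
    using iso unfolding C_def .
  have img': "\<phi> ` ((\<lambda>h. core ((Hol N)\<lparr>carrier := G\<rparr>) H #>\<^bsub>Hol N\<^esub> h) ` H) = hol_stab N G"
    using img unfolding C_def S_def .
  show ?thesis
    by (rule exI[where x = G], rule exI[where x = \<phi>]) (intro conjI G trG iso' img')
qed

end


theorem proposition4p2:
  fixes p e :: nat and N :: "'a monoid"
    and G H :: "('a \<times> ('a \<Rightarrow> 'a)) set"
  assumes "Factorial_Ring.prime p" and "odd p" and "e \<ge> 2"
    and "group N" and "cyclic_group N" and "finite (carrier N)" and "order N = p ^ e"
    and "subgroup G (Hol N)" and "hol_transitive N G"
    and "subgroup H ((Hol N)\<lparr>carrier := G\<rparr>)"
    and "card (rcosets\<^bsub>(Hol N)\<lparr>carrier := G\<rparr>\<^esub> H) = p ^ e"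
  shows "(\<exists>T \<phi>. subgroup T (Hol N) \<and> hol_transitive N T \<and>
            \<phi> \<in> iso ((Hol N)\<lparr>carrier := G\<rparr> Mod core ((Hol N)\<lparr>carrier := G\<rparr>) H)
                    ((Hol N)\<lparr>carrier := T\<rparr>) \<and>
            \<phi> ` ((\<lambda>h. core ((Hol N)\<lparr>carrier := G\<rparr>) H #>\<^bsub>Hol N\<^esub> h) ` H) = hol_stab N T)
         \<longleftrightarrow> (\<exists>g\<in>G. H = g <#\<^bsub>Hol N\<^esub> hol_stab N G #>\<^bsub>Hol N\<^esub> inv\<^bsub>Hol N\<^esub> g)"
proof -
  have grp: "group N" by fact
  have cycN: "cyclic_group N" by fact
  obtain a where a: "a \<in> carrier N" "carrier N = range (\<lambda>n::int. a [^]\<^bsub>N\<^esub> n)"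
    using group.cyclic_group[OF grp] cycN by blast
  have cgN: "comm_group N" by (rule group.cyclic_imp_abelian_group[OF grp cycN])
  have "generate N {a} = carrier N" using group.generate_pow[OF grp a(1)] a(2) by auto
  then have orda: "group.ord N a = p ^ e"
    using group.generate_pow_card[OF grp a(1)] assms(7) by (simp add: order_def)
  have e1: "1 \<le> e" using assms(3) by simp
  interpret cyc N p e a
    by (rule cyc.intro) (use cgN assms(1) assms(2) e1 a orda in auto)
  show ?thesis
  proof
    assume "\<exists>T \<phi>. subgroup T (Hol N) \<and> hol_transitive N T \<and>
            \<phi> \<in> iso ((Hol N)\<lparr>carrier := G\<rparr> Mod core ((Hol N)\<lparr>carrier := G\<rparr>) H)
                    ((Hol N)\<lparr>carrier := T\<rparr>) \<and>
            \<phi> ` ((\<lambda>h. core ((Hol N)\<lparr>carrier := G\<rparr>) H #>\<^bsub>Hol N\<^esub> h) ` H) = hol_stab N T"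
    then obtain T \<phi> where T: "subgroup T (Hol N)" "hol_transitive N T"
      "\<phi> \<in> iso ((Hol N)\<lparr>carrier := G\<rparr> Mod core ((Hol N)\<lparr>carrier := G\<rparr>) H) ((Hol N)\<lparr>carrier := T\<rparr>)"
      by blast
    show "\<exists>g\<in>G. H = g <#\<^bsub>Hol N\<^esub> hol_stab N G #>\<^bsub>Hol N\<^esub> inv\<^bsub>Hol N\<^esub> g"
      by (rule fwd[OF assms(8) assms(9) assms(10) assms(11) T(1) T(2) T(3)])
  next
    assume "\<exists>g\<in>G. H = g <#\<^bsub>Hol N\<^esub> hol_stab N G #>\<^bsub>Hol N\<^esub> inv\<^bsub>Hol N\<^esub> g"
    then obtain g0 where g0: "g0 \<in> G" "H = g0 <#\<^bsub>Hol N\<^esub> hol_stab N G #>\<^bsub>Hol N\<^esub> inv\<^bsub>Hol N\<^esub> g0"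
      by blast
    show "\<exists>T \<phi>. subgroup T (Hol N) \<and> hol_transitive N T \<and>
            \<phi> \<in> iso ((Hol N)\<lparr>carrier := G\<rparr> Mod core ((Hol N)\<lparr>carrier := G\<rparr>) H)
                    ((Hol N)\<lparr>carrier := T\<rparr>) \<and>
            \<phi> ` ((\<lambda>h. core ((Hol N)\<lparr>carrier := G\<rparr>) H #>\<^bsub>Hol N\<^esub> h) ` H) = hol_stab N T"
      by (rule bwd[OF assms(8) assms(9) assms(10) g0(1) g0(2)])
  qed
qed

end
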